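(* In any Poisson $H$-pseudoalgebra $V$ the right Leibniz rule holds: $[ab*c]=a[b*c]+(-1)^{p(a)p(b)}b[a*c]$ for all $a,b,c\in V$.
   Context: $H$ is a cocommutative Hopf algebra over a field $\mathbb F$ of characteristic $0$ (purely even), coproduct $\Delta(h)=h_{(1)}\otimes h_{(2)}$, antipode $S$, $h_{(1)}\otimes h_{(-2)}:=(\mathrm{id}\otimes S)\Delta(h)$, iterated coproduct $h_{(1)}\otimes h_{(2)}\otimes h_{(3)}$. $H^{\otimes r}$ is a right $H$-module via $(h_1\otimes\dots\otimes h_r)h=h_1h_{(1)}\otimes\dots\otimes h_rh_{(r)}$ and $H^{\otimes r}\otimes_H L$ the corresponding tensor product. A Lie $H$-pseudoalgebra is a vector superspace $L$ (parity $p$) with a left $H$-module structure and an even linear map $L\otimes L\to(H\otimes H)\otimes_HL$, $a\otimes b\mapsto[a*b]$, such that for $a,b,c\in L$, $f,g\in H$, $\sigma=(12)$: $[fa*gb]=((f\otimes g)\otimes_H1)[a*b]$; $[b*a]=-(-1)^{p(a)p(b)}(\sigma\otimes_H\mathrm{id})[a*b]$; and $[a*[b*c]]-(-1)^{p(a)p(b)}((\sigma\otimes\mathrm{id})\otimes_H\mathrm{id})[b*[a*c]]=[[a*b]*c]$ in $H^{\otimes3}\otimes_HL$, where, if $[a*b]=\sum_i(f_i\otimes g_i)\otimes_He_i$ and $[e_i*c]=\sum_j(f_{ij}\otimes g_{ij})\otimes_He_{ij}$, then $[[a*b]*c]=\sum_{i,j}(f_if_{ij(1)}\otimes g_if_{ij(2)}\otimes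 g_{ij})\otimes_He_{ij}$, and if $[b*c]=\sum_i(h_i\otimes l_i)\otimes_Hd_i$, $[a*d_i]=\sum_j(h_{ij}\otimes l_{ij})\otimes_Hd_{ij}$, then $[a*[b*c]]=\sum_{i,j}(h_{ij}\otimes h_il_{ij(1)}\otimes l_il_{ij(2)})\otimes_Hd_{ij}$. A Poisson $H$-pseudoalgebra is a Lie $H$-pseudoalgebra $V$ with an even supercommutative associative product $V\otimes V\to V$ such that $h(ab)=(h_{(1)}a)(h_{(2)}b)$ and $[a*bc]=[a*b]c+(-1)^{p(b)p(c)}[a*c]b$, where for $[a*b]=\sum_i(f_i\otimes g_i)\otimes_He_i$ one sets $[a*b]c:=\sum_i(f_i\otimes g_{i(1)})\otimes_He_i(g_{i(-2)}c)$ (well defined). Similarly, for $[b*c]=\sum_i(h_i\otimes l_i)\otimes_Hd_i$, $a[b*c]:=\sum_i(h_{i(1)}\otimes l_i)\otimes_H(h_{i(-2)}a)d_i$. *)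

theory Defs
  imports Main "HOL.Vector_Spaces" "HOL-Library.Function_Algebras"
begin

text \<open>The free F-vector space on a set X is modelled by functions X => F
  (only finitely supported ones occur). A finite list of basic tensors is a
  representative; its image in the free space is the sum of the deltas.\<close>

definition fscale :: "'f::field \<Rightarrow> ('x \<Rightarrow> 'f) \<Rightarrow> ('x \<Rightarrow> 'f)" where
  "fscale c \<phi> = (\<lambda>z. c * \<phi> z)"

definition dlt :: "'x \<Rightarrow> ('x \<Rightarrow> 'f::field)" where
  "dlt x = (\<lambda>y. if y = x then 1 else 0)"

definition fvec :: "'x list \<Rightarrow> ('x \<Rightarrow> 'f::field)" where
  "fvec xs = sum_list (map dlt xs)"

text \<open>Tensor algebra of H over F: multilinearity relations in every slot
  (lists of length n encode elements of the n-th tensor power; the relations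
  are homogeneous in n, so equality is checked degreewise).\<close>

definition tensH_rel :: "('f::field \<Rightarrow> 'h::ab_group_add \<Rightarrow> 'h) \<Rightarrow> ('h list \<Rightarrow> 'f) set" where
  "tensH_rel smH =
     {dlt (xs @ [a + b] @ ys) - dlt (xs @ [a] @ ys) - dlt (xs @ [b] @ ys) | xs a b ys. True}
   \<union> {dlt (xs @ [smH c a] @ ys) - fscale c (dlt (xs @ [a] @ ys)) | xs c a ys. True}"

definition teqH :: "('f::field \<Rightarrow> 'h::ab_group_add \<Rightarrow> 'h) \<Rightarrow> 'h list list \<Rightarrow> 'h list list \<Rightarrow> bool" where
  "teqH smH xs ys \<longleftrightarrow> fvec xs - fvec ys \<in> module.span fscale (tensH_rel smH)"

definition pl :: "('h \<times> 'h) list \<Rightarrow> 'h list list" where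
  "pl xs = map (\<lambda>(a, b). [a, b]) xs"

text \<open>Iterated coproduct  h |-> h_(1) (x) ... (x) h_(r)  (representative),
  computed as (id (x) Delta^(r-1)) Delta.\<close>
fun coprod_iter :: "('h \<Rightarrow> ('h \<times> 'h) list) \<Rightarrow> nat \<Rightarrow> 'h \<Rightarrow> 'h list list" where
  "coprod_iter D 0 h = []"
| "coprod_iter D (Suc 0) h = [[h]]"
| "coprod_iter D (Suc (Suc k)) h =
     concat (map (\<lambda>(x, y). map (Cons x) (coprod_iter D (Suc k) y)) (D h))"

text \<open>Relations defining  H^{(x) r} (x)_H V : multilinearity over F and the
  balancing relation  (fs h) (x)_H e = fs (x)_H (h e)  for the right H-module
  structure  (h_1 (x)..(x) h_r) h = h_1 h_(1) (x) ... (x) h_r h_(r).\<close>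

definition tensV_rel ::
  "('f::field \<Rightarrow> 'h::ring_1 \<Rightarrow> 'h) \<Rightarrow> ('f \<Rightarrow> 'v::ab_group_add \<Rightarrow> 'v) \<Rightarrow>
   ('h \<Rightarrow> ('h \<times> 'h) list) \<Rightarrow> ('h \<Rightarrow> 'v \<Rightarrow> 'v) \<Rightarrow> ('h list \<times> 'v \<Rightarrow> 'f) set" where
  "tensV_rel smH smV D act =
     {dlt (xs @ [a + b] @ ys, e) - dlt (xs @ [a] @ ys, e) - dlt (xs @ [b] @ ys, e) | xs a b ys e. True}
   \<union> {dlt (xs @ [smH c a] @ ys, e) - fscale c (dlt (xs @ [a] @ ys, e)) | xs c a ys e. True}
   \<union> {dlt (fs, e + e') - dlt (fs, e) - dlt (fs, e') | fs e e'. True}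
   \<union> {dlt (fs, smV c e) - fscale c (dlt (fs, e)) | fs c e. True}
   \<union> {fvec (map (\<lambda>hs. (map2 (*) fs hs, e)) (coprod_iter D (length fs) h)) - dlt (fs, act h e)
       | fs h e. fs \<noteq> []}"

definition teqV ::
  "('f::field \<Rightarrow> 'h::ring_1 \<Rightarrow> 'h) \<Rightarrow> ('f \<Rightarrow> 'v::ab_group_add \<Rightarrow> 'v) \<Rightarrow>
   ('h \<Rightarrow> ('h \<times> 'h) list) \<Rightarrow> ('h \<Rightarrow> 'v \<Rightarrow> 'v) \<Rightarrow>
   ('h list \<times> 'v) list \<Rightarrow> ('h list \<times> 'v) list \<Rightarrow> bool" where
  "teqV smH smV D act xs ys \<longleftrightarrow>
     fvec xs - fvec ys \<in> module.span fscale (tensV_rel smH smV D act)"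

definition cocomm_hopf ::
  "('f::field_char_0 \<Rightarrow> 'h::ring_1 \<Rightarrow> 'h) \<Rightarrow> ('h \<Rightarrow> ('h \<times> 'h) list) \<Rightarrow> ('h \<Rightarrow> 'f) \<Rightarrow> ('h \<Rightarrow> 'h) \<Rightarrow> bool" where
  "cocomm_hopf smH D eps S \<longleftrightarrow>
     vector_space smH
   \<and> (\<forall>c x y. smH c (x * y) = smH c x * y \<and> smH c (x * y) = x * smH c y)
   \<comment> \<open>coproduct: linear algebra map H -> H (x) H\<close>
   \<and> (\<forall>x y. teqH smH (pl (D (x + y))) (pl (D x @ D y)))
   \<and> (\<forall>c x. teqH smH (pl (D (smH c x))) (pl (map (\<lambda>(a, b). (smH c a, b)) (D x))))
   \<and> (\<forall>x y. teqH smH (pl (D (x * y))) [[a * c, b * d]. (a, b) \<leftarrow> D x, (c, d) \<leftarrow> D y])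
   \<and> teqH smH (pl (D 1)) [[1, 1]]
   \<comment> \<open>coassociativity\<close>
   \<and> (\<forall>x. teqH smH [[a, b1, b2]. (a, b) \<leftarrow> D x, (b1, b2) \<leftarrow> D b]
                     [[a1, a2, b]. (a, b) \<leftarrow> D x, (a1, a2) \<leftarrow> D a])
   \<comment> \<open>counit: algebra map H -> F\<close>
   \<and> Vector_Spaces.linear smH (*) eps
   \<and> (\<forall>x y. eps (x * y) = eps x * eps y) \<and> eps 1 = 1
   \<and> (\<forall>x. sum_list [smH (eps a) b. (a, b) \<leftarrow> D x] = x \<and> sum_list [smH (eps b) a. (a, b) \<leftarrow> D x] = x)
   \<comment> \<open>antipode\<close>
   \<and> Vector_Spaces.linear smH smH S
   \<and> (\<forall>x. sum_list [S a * b. (a, b) \<leftarrow> D x] = smH (eps x) 1 \<and> sum_list [a * S b. (a, b) \<leftarrow> D x] = smH (eps x) 1)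
   \<comment> \<open>cocommutativity\<close>
   \<and> (\<forall>x. teqH smH (pl (D x)) (pl (map (\<lambda>(a, b). (b, a)) (D x))))"

text \<open>Homogeneous component of parity p (False = even, True = odd).\<close>
definition Vp :: "'v set \<Rightarrow> 'v set \<Rightarrow> bool \<Rightarrow> 'v set" where
  "Vp V0 V1 p = (if p then V1 else V0)"

definition sgn_pp :: "bool \<Rightarrow> bool \<Rightarrow> 'f::field" where
  "sgn_pp p q = (if p \<and> q then -1 else 1)"

definition superspace :: "('f::field \<Rightarrow> 'v::ab_group_add \<Rightarrow> 'v) \<Rightarrow> 'v set \<Rightarrow> 'v set \<Rightarrow> bool" where
  "superspace smV V0 V1 \<longleftrightarrow> vector_space smV \<and> module.subspace smV V0 \<and> module.subspace smV V1
     \<and> V0 \<inter> V1 = {0} \<and> (\<forall>v. \<exists>x\<in>V0. \<exists>y\<in>V1. v = x + y)"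

text \<open>Left H-module structure on the superspace V (H purely even, so the action preserves parity).\<close>
definition Hmodule ::
  "('f::field \<Rightarrow> 'h::ring_1 \<Rightarrow> 'h) \<Rightarrow> ('f \<Rightarrow> 'v::ab_group_add \<Rightarrow> 'v) \<Rightarrow> 'v set \<Rightarrow> 'v set \<Rightarrow>
   ('h \<Rightarrow> 'v \<Rightarrow> 'v) \<Rightarrow> bool" where
  "Hmodule smH smV V0 V1 act \<longleftrightarrow>
     (\<forall>x y v. act (x + y) v = act x v + act y v)
   \<and> (\<forall>x v w. act x (v + w) = act x v + act x w)
   \<and> (\<forall>c x v. act (smH c x) v = smV c (act x v))
   \<and> (\<forall>c x v. act x (smV c v) = smV c (act x v))
   \<and> (\<forall>x y v. act (x * y) v = act x (act y v))
   \<and> (\<forall>v. act 1 v = v)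
   \<and> (\<forall>x. act x ` V0 \<subseteq> V0 \<and> act x ` V1 \<subseteq> V1)"

definition scT :: "('f \<Rightarrow> 'v \<Rightarrow> 'v) \<Rightarrow> 'f \<Rightarrow> ('h list \<times> 'v) list \<Rightarrow> ('h list \<times> 'v) list" where
  "scT smV c xs = map (\<lambda>(fs, e). (fs, smV c e)) xs"

text \<open>[[a*b]*c]\<close>
definition brL ::
  "('h::ring_1 \<Rightarrow> ('h \<times> 'h) list) \<Rightarrow> ('v \<Rightarrow> 'v \<Rightarrow> ('h list \<times> 'v) list) \<Rightarrow> 'v \<Rightarrow> 'v \<Rightarrow> 'v \<Rightarrow> ('h list \<times> 'v) list" where
  "brL D br a b c =
     [([fs ! 0 * x, fs ! 1 * y, gs ! 1], d). (fs, e) \<leftarrow> br a b, (gs, d) \<leftarrow> br e c, (x, y) \<leftarrow> D (gs ! 0)]"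

text \<open>[a*[b*c]]\<close>
definition brR ::
  "('h::ring_1 \<Rightarrow> ('h \<times> 'h) list) \<Rightarrow> ('v \<Rightarrow> 'v \<Rightarrow> ('h list \<times> 'v) list) \<Rightarrow> 'v \<Rightarrow> 'v \<Rightarrow> 'v \<Rightarrow> ('h list \<times> 'v) list" where
  "brR D br a b c =
     [([ks ! 0, hs ! 0 * x, hs ! 1 * y], d'). (hs, d) \<leftarrow> br b c, (ks, d') \<leftarrow> br a d, (x, y) \<leftarrow> D (ks ! 1)]"

definition swap12 :: "'h list \<times> 'v \<Rightarrow> 'h list \<times> 'v" where
  "swap12 t = ([fst t ! 1, fst t ! 0, fst t ! 2], snd t)"

definition lie_pseudo ::
  "('f::field_char_0 \<Rightarrow> 'h::ring_1 \<Rightarrow> 'h) \<Rightarrow> ('h \<Rightarrow> ('h \<times> 'h) list) \<Rightarrow> ('h \<Rightarrow> 'f) \<Rightarrow> ('h \<Rightarrow> 'h) \<Rightarrow>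
   ('f \<Rightarrow> 'v::ab_group_add \<Rightarrow> 'v) \<Rightarrow> 'v set \<Rightarrow> 'v set \<Rightarrow> ('h \<Rightarrow> 'v \<Rightarrow> 'v) \<Rightarrow>
   ('v \<Rightarrow> 'v \<Rightarrow> ('h list \<times> 'v) list) \<Rightarrow> bool" where
  "lie_pseudo smH D eps S smV V0 V1 act br \<longleftrightarrow>
     cocomm_hopf smH D eps S \<and> superspace smV V0 V1 \<and> Hmodule smH smV V0 V1 act
   \<comment> \<open>the bracket takes values in (H (x) H) (x)_H V\<close>
   \<and> (\<forall>a b. \<forall>(fs, e) \<in> set (br a b). length fs = 2)
   \<comment> \<open>F-bilinearity\<close>
   \<and> (\<forall>a a' b. teqV smH smV D act (br (a + a') b) (br a b @ br a' b))
   \<and> (\<forall>a b b'. teqV smH smV D act (br a (b + b')) (br a b @ br a b'))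
   \<and> (\<forall>c a b. teqV smH smV D act (br (smV c a) b) (scT smV c (br a b)))
   \<and> (\<forall>c a b. teqV smH smV D act (br a (smV c b)) (scT smV c (br a b)))
   \<comment> \<open>the bracket is even\<close>
   \<and> (\<forall>a b pa pb. a \<in> Vp V0 V1 pa \<longrightarrow> b \<in> Vp V0 V1 pb \<longrightarrow>
        (\<exists>ys. teqV smH smV D act (br a b) ys \<and>
              (\<forall>(fs, e) \<in> set ys. length fs = 2 \<and> e \<in> Vp V0 V1 (pa \<noteq> pb))))
   \<comment> \<open>H-sesquilinearity  [fa*gb] = ((f (x) g) (x)_H 1)[a*b]\<close>
   \<and> (\<forall>f g a b. teqV smH smV D act (br (act f a) (act g b))
                    (map (\<lambda>(fs, e). (map2 (*) [f, g] fs, e)) (br a b)))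
   \<comment> \<open>skew-symmetry\<close>
   \<and> (\<forall>a b pa pb. a \<in> Vp V0 V1 pa \<longrightarrow> b \<in> Vp V0 V1 pb \<longrightarrow>
        teqV smH smV D act (br b a) (scT smV (- sgn_pp pa pb) (map (\<lambda>(fs, e). (rev fs, e)) (br a b))))
   \<comment> \<open>Jacobi identity\<close>
   \<and> (\<forall>a b c pa pb pc. a \<in> Vp V0 V1 pa \<longrightarrow> b \<in> Vp V0 V1 pb \<longrightarrow> c \<in> Vp V0 V1 pc \<longrightarrow>
        teqV smH smV D act
          (brR D br a b c @ scT smV (- sgn_pp pa pb) (map swap12 (brR D br b a c)))
          (brL D br a b c))"

text \<open>[a*b]c  and  a[b*c]  (with h_(1) (x) h_(-2) = (id (x) S) Delta h).\<close>
definition rmul ::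
  "('h \<Rightarrow> ('h \<times> 'h) list) \<Rightarrow> ('h \<Rightarrow> 'h) \<Rightarrow> ('h \<Rightarrow> 'v \<Rightarrow> 'v) \<Rightarrow> ('v \<Rightarrow> 'v \<Rightarrow> 'v) \<Rightarrow>
   ('h list \<times> 'v) list \<Rightarrow> 'v \<Rightarrow> ('h list \<times> 'v) list" where
  "rmul D S act mul xs c = [([fs ! 0, x], mul e (act (S y) c)). (fs, e) \<leftarrow> xs, (x, y) \<leftarrow> D (fs ! 1)]"

definition lmul ::
  "('h \<Rightarrow> ('h \<times> 'h) list) \<Rightarrow> ('h \<Rightarrow> 'h) \<Rightarrow> ('h \<Rightarrow> 'v \<Rightarrow> 'v) \<Rightarrow> ('v \<Rightarrow> 'v \<Rightarrow> 'v) \<Rightarrow>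
   'v \<Rightarrow> ('h list \<times> 'v) list \<Rightarrow> ('h list \<times> 'v) list" where
  "lmul D S act mul a xs = [([x, fs ! 1], mul (act (S y) a) d). (fs, d) \<leftarrow> xs, (x, y) \<leftarrow> D (fs ! 0)]"

definition poisson_pseudo ::
  "('f::field_char_0 \<Rightarrow> 'h::ring_1 \<Rightarrow> 'h) \<Rightarrow> ('h \<Rightarrow> ('h \<times> 'h) list) \<Rightarrow> ('h \<Rightarrow> 'f) \<Rightarrow> ('h \<Rightarrow> 'h) \<Rightarrow>
   ('f \<Rightarrow> 'v::ab_group_add \<Rightarrow> 'v) \<Rightarrow> 'v set \<Rightarrow> 'v set \<Rightarrow> ('h \<Rightarrow> 'v \<Rightarrow> 'v) \<Rightarrow>
   ('v \<Rightarrow> 'v \<Rightarrow> ('h list \<times> 'v) list) \<Rightarrow> ('v \<Rightarrow> 'v \<Rightarrow> 'v) \<Rightarrow> bool" where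
  "poisson_pseudo smH D eps S smV V0 V1 act br mul \<longleftrightarrow>
     lie_pseudo smH D eps S smV V0 V1 act br
   \<comment> \<open>F-bilinear, associative, even, supercommutative product\<close>
   \<and> (\<forall>a a' b. mul (a + a') b = mul a b + mul a' b)
   \<and> (\<forall>a b b'. mul a (b + b') = mul a b + mul a b')
   \<and> (\<forall>c a b. mul (smV c a) b = smV c (mul a b) \<and> mul a (smV c b) = smV c (mul a b))
   \<and> (\<forall>a b c. mul (mul a b) c = mul a (mul b c))
   \<and> (\<forall>a b pa pb. a \<in> Vp V0 V1 pa \<longrightarrow> b \<in> Vp V0 V1 pb \<longrightarrow>
        mul a b \<in> Vp V0 V1 (pa \<noteq> pb) \<and> mul a b = smV (sgn_pp pa pb) (mul b a))
   \<comment> \<open>h(ab) = (h_(1) a)(h_(2) b)\<close>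
   \<and> (\<forall>h a b. act h (mul a b) = sum_list [mul (act x a) (act y b). (x, y) \<leftarrow> D h])
   \<comment> \<open>left Leibniz rule\<close>
   \<and> (\<forall>a b c pa pb pc. a \<in> Vp V0 V1 pa \<longrightarrow> b \<in> Vp V0 V1 pb \<longrightarrow> c \<in> Vp V0 V1 pc \<longrightarrow>
        teqV smH smV D act (br a (mul b c))
          (rmul D S act mul (br a b) c @ scT smV (sgn_pp pb pc) (rmul D S act mul (br a c) b)))"

end

theory Submission
  imports Defs "HOL-Library.Multiset"
begin

lemma fs_module: "module (fscale :: 'f::field \<Rightarrow> ('x \<Rightarrow> 'f) \<Rightarrow> ('x \<Rightarrow> 'f))"
  by unfold_locales (auto simp: fscale_def fun_eq_iff algebra_simps)

definition spt :: "('x \<Rightarrow> 'f::zero) \<Rightarrow> 'x set" where "spt v = {x. v x \<noteq> 0}"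

definition Lin :: "('f::field \<Rightarrow> 'w::ab_group_add \<Rightarrow> 'w) \<Rightarrow> ('x \<Rightarrow> 'w) \<Rightarrow> ('x \<Rightarrow> 'f) \<Rightarrow> 'w" where
  "Lin smW g v = (\<Sum>x\<in>spt v. smW (v x) (g x))"

lemma Lin_sub:
  assumes "module smW" "finite A" "spt v \<subseteq> A"
  shows "Lin smW g v = (\<Sum>x\<in>A. smW (v x) (g x))"
  unfolding Lin_def
  apply (rule sum.mono_neutral_left[OF assms(2,3)])
  using assms(1) by (auto simp: spt_def module.scale_zero_left)

lemma spt_add: "spt (v + w :: 'x \<Rightarrow> 'f::field) \<subseteq> spt v \<union> spt w"
  by (auto simp: spt_def)
lemma spt_diff: "spt (v - w :: 'x \<Rightarrow> 'f::field) \<subseteq> spt v \<union> spt w"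
  by (auto simp: spt_def)
lemma spt_fscale: "spt (fscale c v) \<subseteq> spt v"
  by (auto simp: spt_def fscale_def)
lemma spt_dlt: "spt (dlt x :: _ \<Rightarrow> 'f::field) = {x}"
  by (auto simp: spt_def dlt_def)
lemma spt_zero[simp]: "spt (0 :: 'x \<Rightarrow> 'f::zero) = {}"
  by (auto simp: spt_def zero_fun_def)
lemma spt_zero'[simp]: "spt (\<lambda>x. 0 :: 'f::zero) = {}"
  by (auto simp: spt_def)

lemma fvec_Nil[simp]: "fvec [] = 0" by (simp add: fvec_def)
lemma fvec_Cons: "fvec (x # xs) = dlt x + fvec xs" by (simp add: fvec_def)
lemma fvec_append: "fvec (xs @ ys) = fvec xs + fvec ys" by (simp add: fvec_def)
lemma fvec_single: "fvec [x] = dlt x" by (simp add: fvec_def)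

lemma spt_fvec: "spt (fvec xs :: _ \<Rightarrow> 'f::field) \<subseteq> set xs"
proof (induction xs)
  case Nil then show ?case by simp
next
  case (Cons x xs)
  then show ?case using spt_add[of "dlt x" "fvec xs"] spt_dlt[of x] unfolding fvec_Cons by (simp only: set_simps) blast
qed

lemma finite_spt_fvec: "finite (spt (fvec xs :: _ \<Rightarrow> 'f::field))"
  using finite_subset[OF spt_fvec] by simp

lemma Lin_add:
  assumes M: "module smW" and "finite (spt v)" "finite (spt w)"
  shows "Lin smW g (v + w) = Lin smW g v + Lin smW g w"
proof -
  let ?A = "spt v \<union> spt w"
  have "Lin smW g (v + w) = (\<Sum>x\<in>?A. smW ((v + w) x) (g x))"
    by (rule Lin_sub[OF M]) (use assms spt_add[of v w] in auto)
  also have "\<dots> = (\<Sum>x\<in>?A. smW (v x) (g x)) + (\<Sum>x\<in>?A. smW (w x) (g x))"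
    by (simp add: module.scale_left_distrib[OF M] sum.distrib)
  also have "(\<Sum>x\<in>?A. smW (v x) (g x)) = Lin smW g v"
    by (rule Lin_sub[OF M, symmetric]) (use assms in auto)
  also have "(\<Sum>x\<in>?A. smW (w x) (g x)) = Lin smW g w"
    by (rule Lin_sub[OF M, symmetric]) (use assms in auto)
  finally show ?thesis .
qed

lemma Lin_diff:
  assumes M: "module smW" and "finite (spt v)" "finite (spt w)"
  shows "Lin smW g (v - w) = Lin smW g v - Lin smW g w"
proof -
  let ?A = "spt v \<union> spt w"
  have "Lin smW g (v - w) = (\<Sum>x\<in>?A. smW ((v - w) x) (g x))"
    by (rule Lin_sub[OF M]) (use assms spt_diff[of v w] in auto)
  also have "\<dots> = (\<Sum>x\<in>?A. smW (v x) (g x)) - (\<Sum>x\<in>?A. smW (w x) (g x))"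
    by (simp add: module.scale_left_diff_distrib[OF M] sum_subtractf)
  also have "(\<Sum>x\<in>?A. smW (v x) (g x)) = Lin smW g v"
    by (rule Lin_sub[OF M, symmetric]) (use assms in auto)
  also have "(\<Sum>x\<in>?A. smW (w x) (g x)) = Lin smW g w"
    by (rule Lin_sub[OF M, symmetric]) (use assms in auto)
  finally show ?thesis .
qed

lemma Lin_fscale:
  assumes M: "module smW" and "finite (spt v)"
  shows "Lin smW g (fscale c v) = smW c (Lin smW g v)"
proof -
  have "Lin smW g (fscale c v) = (\<Sum>x\<in>spt v. smW (fscale c v x) (g x))"
    by (rule Lin_sub[OF M]) (use assms spt_fscale[of c v] in auto)
  also have "\<dots> = smW c (Lin smW g v)"
    by (simp add: Lin_def fscale_def module.scale_sum_right[OF M] module.scale_scale[OF M])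
  finally show ?thesis .
qed

lemma Lin_dlt:
  assumes M: "module smW"
  shows "Lin smW g (dlt x :: _ \<Rightarrow> 'f::field) = g x"
  unfolding Lin_def spt_dlt by (simp add: dlt_def module.scale_one[OF M])

lemma Lin_zero[simp]: "Lin smW g (0 :: 'x \<Rightarrow> 'f::field) = 0"
  by (simp add: Lin_def)
lemma Lin_zero'[simp]: "Lin smW g (\<lambda>x. 0 :: 'f::field) = 0"
  by (simp add: Lin_def)

lemma Lin_fvec:
  assumes M: "module smW"
  shows "Lin smW g (fvec xs :: _ \<Rightarrow> 'f::field) = sum_list (map g xs)"
proof (induction xs)
  case Nil then show ?case by (simp add: Lin_zero)
next
  case (Cons x xs)
  have "Lin smW g (fvec (x # xs) :: _ \<Rightarrow> 'f) = Lin smW g (dlt x :: _ \<Rightarrow> 'f) + Lin smW g (fvec xs :: _ \<Rightarrow> 'f)"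
    unfolding fvec_Cons
    by (rule Lin_add[OF M]) (simp_all add: spt_dlt finite_spt_fvec)
  then show ?case using Cons by (simp add: Lin_dlt[OF M])
qed

lemma span_lift:
  assumes M: "module smW" and U: "module.subspace smW U"
    and R: "\<And>r. r \<in> R \<Longrightarrow> finite (spt r) \<and> Lin smW g r \<in> U"
    and v: "v \<in> module.span fscale R"
  shows "finite (spt v) \<and> Lin smW g v \<in> U"
  apply (rule module.span_induct_alt[OF fs_module v, where h = "\<lambda>v. finite (spt v) \<and> Lin smW g v \<in> U"])
  subgoal using module.subspace_0[OF M U] by simp
  subgoal for c x y
  proof -
  assume "x \<in> R" "finite (spt y) \<and> Lin smW g y \<in> U"
  note 2 = this
  have fx: "finite (spt x)" and ux: "Lin smW g x \<in> U" using R[OF 2(1)] by auto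
  have fy: "finite (spt y)" and uy: "Lin smW g y \<in> U" using 2(2) by auto
  have fcx: "finite (spt (fscale c x))" using finite_subset[OF spt_fscale fx] .
  have "finite (spt (fscale c x + y))"
    using finite_subset[OF spt_add[of "fscale c x" y]] fcx fy by simp
  moreover have "Lin smW g (fscale c x + y) = smW c (Lin smW g x) + Lin smW g y"
    using Lin_add[OF M fcx fy] Lin_fscale[OF M fx] by simp
  moreover have "smW c (Lin smW g x) + Lin smW g y \<in> U"
    using module.subspace_add[OF M U] module.subspace_scale[OF M U] ux uy by blast
  ultimately show "finite (spt (fscale c x + y)) \<and> Lin smW g (fscale c x + y) \<in> U" by simp
qed
  done

locale PP =
  fixes smH :: "'f::field_char_0 \<Rightarrow> 'h::ring_1 \<Rightarrow> 'h"
    and D :: "'h \<Rightarrow> ('h \<times> 'h) list" and eps :: "'h \<Rightarrow> 'f" and S :: "'h \<Rightarrow> 'h"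
    and smV :: "'f \<Rightarrow> 'v::ab_group_add \<Rightarrow> 'v" and V0 V1 :: "'v set"
    and act :: "'h \<Rightarrow> 'v \<Rightarrow> 'v" and br :: "'v \<Rightarrow> 'v \<Rightarrow> ('h list \<times> 'v) list"
    and mul :: "'v \<Rightarrow> 'v \<Rightarrow> 'v"
  assumes P: "poisson_pseudo smH D eps S smV V0 V1 act br mul"
begin

lemmas LP = P[unfolded poisson_pseudo_def, THEN conjunct1, rule_format]
lemmas HF = LP[unfolded lie_pseudo_def, THEN conjunct1, rule_format]
lemmas SS = LP[unfolded lie_pseudo_def, THEN conjunct2, THEN conjunct1, rule_format]
lemmas HM = LP[unfolded lie_pseudo_def, THEN conjunct2, THEN conjunct2, THEN conjunct1, rule_format]
lemmas br_len0 = LP[unfolded lie_pseudo_def, THEN conjunct2, THEN conjunct2, THEN conjunct2, THEN conjunct1, rule_format]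
lemmas br_even = LP[unfolded lie_pseudo_def, THEN conjunct2, THEN conjunct2, THEN conjunct2, THEN conjunct2, THEN conjunct2, THEN conjunct2, THEN conjunct2, THEN conjunct2, THEN conjunct1, rule_format]
lemmas br_skew = LP[unfolded lie_pseudo_def, THEN conjunct2, THEN conjunct2, THEN conjunct2, THEN conjunct2, THEN conjunct2, THEN conjunct2, THEN conjunct2, THEN conjunct2, THEN conjunct2, THEN conjunct2, THEN conjunct1, rule_format]
lemmas H_vs = HF[unfolded cocomm_hopf_def, THEN conjunct1, rule_format]
lemmas H_smult = HF[unfolded cocomm_hopf_def, THEN conjunct2, THEN conjunct1, rule_format]
lemmas D_add = HF[unfolded cocomm_hopf_def, THEN conjunct2, THEN conjunct2, THEN conjunct1, rule_format]
lemmas D_sm = HF[unfolded cocomm_hopf_def, THEN conjunct2, THEN conjunct2, THEN conjunct2, THEN conjunct1, rule_format]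
lemmas D_mult = HF[unfolded cocomm_hopf_def, THEN conjunct2, THEN conjunct2, THEN conjunct2, THEN conjunct2, THEN conjunct1, rule_format]
lemmas coassoc = HF[unfolded cocomm_hopf_def, THEN conjunct2, THEN conjunct2, THEN conjunct2, THEN conjunct2, THEN conjunct2, THEN conjunct2, THEN conjunct1, rule_format]
lemmas eps_lin = HF[unfolded cocomm_hopf_def, THEN conjunct2, THEN conjunct2, THEN conjunct2, THEN conjunct2, THEN conjunct2, THEN conjunct2, THEN conjunct2, THEN conjunct1, rule_format]
lemmas eps_mult = HF[unfolded cocomm_hopf_def, THEN conjunct2, THEN conjunct2, THEN conjunct2, THEN conjunct2, THEN conjunct2, THEN conjunct2, THEN conjunct2, THEN conjunct2, THEN conjunct1, rule_format]
lemmas eps_one = HF[unfolded cocomm_hopf_def, THEN conjunct2, THEN conjunct2, THEN conjunct2, THEN conjunct2, THEN conjunct2, THEN conjunct2, THEN conjunct2, THEN conjunct2, THEN conjunct2, THEN conjunct1, rule_format]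
lemmas counit = HF[unfolded cocomm_hopf_def, THEN conjunct2, THEN conjunct2, THEN conjunct2, THEN conjunct2, THEN conjunct2, THEN conjunct2, THEN conjunct2, THEN conjunct2, THEN conjunct2, THEN conjunct2, THEN conjunct1, rule_format]
lemmas S_lin = HF[unfolded cocomm_hopf_def, THEN conjunct2, THEN conjunct2, THEN conjunct2, THEN conjunct2, THEN conjunct2, THEN conjunct2, THEN conjunct2, THEN conjunct2, THEN conjunct2, THEN conjunct2, THEN conjunct2, THEN conjunct1, rule_format]
lemmas antip = HF[unfolded cocomm_hopf_def, THEN conjunct2, THEN conjunct2, THEN conjunct2, THEN conjunct2, THEN conjunct2, THEN conjunct2, THEN conjunct2, THEN conjunct2, THEN conjunct2, THEN conjunct2, THEN conjunct2, THEN conjunct2, THEN conjunct1, rule_format]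
lemmas cocomm = HF[unfolded cocomm_hopf_def, THEN conjunct2, THEN conjunct2, THEN conjunct2, THEN conjunct2, THEN conjunct2, THEN conjunct2, THEN conjunct2, THEN conjunct2, THEN conjunct2, THEN conjunct2, THEN conjunct2, THEN conjunct2, THEN conjunct2, rule_format]
lemmas V_vs = SS[unfolded superspace_def, THEN conjunct1, rule_format]
lemmas V0_sub = SS[unfolded superspace_def, THEN conjunct2, THEN conjunct1, rule_format]
lemmas V1_sub = SS[unfolded superspace_def, THEN conjunct2, THEN conjunct2, THEN conjunct1, rule_format]
lemmas V_dec = SS[unfolded superspace_def, THEN conjunct2, THEN conjunct2, THEN conjunct2, THEN conjunct2, rule_format]
lemmas act_add1 = HM[unfolded Hmodule_def, THEN conjunct1, rule_format]
lemmas act_add2 = HM[unfolded Hmodule_def, THEN conjunct2, THEN conjunct1, rule_format]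
lemmas act_sm1 = HM[unfolded Hmodule_def, THEN conjunct2, THEN conjunct2, THEN conjunct1, rule_format]
lemmas act_sm2 = HM[unfolded Hmodule_def, THEN conjunct2, THEN conjunct2, THEN conjunct2, THEN conjunct1, rule_format]
lemmas act_mult = HM[unfolded Hmodule_def, THEN conjunct2, THEN conjunct2, THEN conjunct2, THEN conjunct2, THEN conjunct1, rule_format]
lemmas act_one = HM[unfolded Hmodule_def, THEN conjunct2, THEN conjunct2, THEN conjunct2, THEN conjunct2, THEN conjunct2, THEN conjunct1, rule_format]
lemmas act_Vp0 = HM[unfolded Hmodule_def, THEN conjunct2, THEN conjunct2, THEN conjunct2, THEN conjunct2, THEN conjunct2, THEN conjunct2, rule_format]
lemmas mul_add1 = P[unfolded poisson_pseudo_def, THEN conjunct2, THEN conjunct1, rule_format]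
lemmas mul_add2 = P[unfolded poisson_pseudo_def, THEN conjunct2, THEN conjunct2, THEN conjunct1, rule_format]
lemmas mul_sm = P[unfolded poisson_pseudo_def, THEN conjunct2, THEN conjunct2, THEN conjunct2, THEN conjunct1, rule_format]
lemmas mul_assoc = P[unfolded poisson_pseudo_def, THEN conjunct2, THEN conjunct2, THEN conjunct2, THEN conjunct2, THEN conjunct1, rule_format]
lemmas mul_Vp_both = P[unfolded poisson_pseudo_def, THEN conjunct2, THEN conjunct2, THEN conjunct2, THEN conjunct2, THEN conjunct2, THEN conjunct1, rule_format]
lemmas act_mul = P[unfolded poisson_pseudo_def, THEN conjunct2, THEN conjunct2, THEN conjunct2, THEN conjunct2, THEN conjunct2, THEN conjunct2, THEN conjunct1, rule_format]
lemmas leibniz = P[unfolded poisson_pseudo_def, THEN conjunct2, THEN conjunct2, THEN conjunct2, THEN conjunct2, THEN conjunct2, THEN conjunct2, THEN conjunct2, rule_format]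

lemma H_mod: "module smH" using H_vs by (simp add: module_iff_vector_space)
lemma H_smult1: "smH c (x * y) = smH c x * y" using H_smult by blast
lemma H_smult2: "smH c (x * y) = x * smH c y" using H_smult by blast
lemma eps_add: "eps (x + y) = eps x + eps y" using eps_lin unfolding Vector_Spaces.linear_iff by blast
lemma eps_sm: "eps (smH c x) = c * eps x" using eps_lin unfolding Vector_Spaces.linear_iff by blast
lemma counit1: "sum_list [smH (eps a) b. (a, b) \<leftarrow> D x] = x" using counit by blast
lemma counit2: "sum_list [smH (eps b) a. (a, b) \<leftarrow> D x] = x" using counit by blast
lemma S_add: "S (x + y) = S x + S y" using S_lin unfolding Vector_Spaces.linear_iff by blast
lemma S_sm: "S (smH c x) = smH c (S x)" using S_lin unfolding Vector_Spaces.linear_iff by blast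
lemma anti1: "sum_list [S a * b. (a, b) \<leftarrow> D x] = smH (eps x) 1" using antip by blast
lemma anti2: "sum_list [a * S b. (a, b) \<leftarrow> D x] = smH (eps x) 1" using antip by blast
lemma V_mod: "module smV" using V_vs by (simp add: module_iff_vector_space)
lemma act_Vp: "v \<in> Vp V0 V1 p \<Longrightarrow> act x v \<in> Vp V0 V1 p"
  using act_Vp0[of x] unfolding Vp_def by (cases p) auto
lemma br_len: "(fs, e) \<in> set (br a b) \<Longrightarrow> length fs = 2"
  using br_len0[of "(fs, e)" a b] by simp
lemma mul_sm1: "mul (smV c a) b = smV c (mul a b)" using mul_sm by blast
lemma mul_sm2: "mul a (smV c b) = smV c (mul a b)" using mul_sm by blast
lemma mul_Vp: "a \<in> Vp V0 V1 pa \<Longrightarrow> b \<in> Vp V0 V1 pb \<Longrightarrow> mul a b \<in> Vp V0 V1 (pa \<noteq> pb)"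
  using mul_Vp_both by blast
lemma mul_comm: "a \<in> Vp V0 V1 pa \<Longrightarrow> b \<in> Vp V0 V1 pb \<Longrightarrow> mul a b = smV (sgn_pp pa pb) (mul b a)"
  using mul_Vp_both by blast

end

lemma fin_dlt[simp]: "finite (spt (dlt x :: _ \<Rightarrow> 'f::field))"
  by (simp add: spt_dlt)
lemma fin_diff[simp]: "finite (spt v) \<Longrightarrow> finite (spt w) \<Longrightarrow> finite (spt (v - w :: _ \<Rightarrow> 'f::field))"
  using finite_subset[OF spt_diff[of v w]] by simp
lemma fin_add[simp]: "finite (spt v) \<Longrightarrow> finite (spt w) \<Longrightarrow> finite (spt (v + w :: _ \<Rightarrow> 'f::field))"
  using finite_subset[OF spt_add[of v w]] by simp
lemma fin_fscale[simp]: "finite (spt v) \<Longrightarrow> finite (spt (fscale c v :: _ \<Rightarrow> 'f::field))"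
  using finite_subset[OF spt_fscale[of c v]] by simp
lemma fin_fvec[simp]: "finite (spt (fvec xs :: _ \<Rightarrow> 'f::field))"
  by (rule finite_spt_fvec)

lemma fvec_mset:
  assumes "mset xs = mset ys" shows "fvec xs = fvec ys"
proof -
  have a: "fvec xs = sum_mset (image_mset dlt (mset xs))"
    by (simp only: fvec_def sum_mset_sum_list[symmetric] mset_map)
  have b: "fvec ys = sum_mset (image_mset dlt (mset ys))"
    by (simp only: fvec_def sum_mset_sum_list[symmetric] mset_map)
  show ?thesis unfolding a b assms ..
qed

lemma sum_list_fvec: "sum_list (map (\<lambda>x. fvec (\<phi> x)) X) = fvec (concat (map \<phi> X))"
  by (induction X) (simp_all add: fvec_append)

lemma fscale_add: "fscale c (v + w) = fscale c v + fscale c w"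
  by (simp add: fscale_def fun_eq_iff distrib_left)
lemma fscale_fvec_Cons: "fscale c (fvec (x # xs)) = fscale c (dlt x) + fscale c (fvec xs)"
  by (simp add: fvec_Cons fscale_add)
lemma fscale_zero: "fscale c 0 = 0"
  by (simp add: fscale_def fun_eq_iff)
lemma fscale_zero': "fscale c (\<lambda>x. 0) = 0"
  by (simp add: fscale_def fun_eq_iff)

context PP
begin

abbreviation SPV :: "('h list \<times> 'v \<Rightarrow> 'f) set" where
  "SPV \<equiv> module.span fscale (tensV_rel smH smV D act)"
abbreviation SPH :: "('h list \<Rightarrow> 'f) set" where
  "SPH \<equiv> module.span fscale (tensH_rel smH)"

abbreviation tq :: "('h list \<times> 'v) list \<Rightarrow> ('h list \<times> 'v) list \<Rightarrow> bool" (infix "\<approx>" 50) where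
  "tq X Y \<equiv> teqV smH smV D act X Y"
abbreviation tqh :: "'h list list \<Rightarrow> 'h list list \<Rightarrow> bool" where
  "tqh X Y \<equiv> teqH smH X Y"

lemmas spV_zero = module.span_zero[OF fs_module, of "tensV_rel smH smV D act"]
lemmas spV_add = module.span_add[OF fs_module, of _ "tensV_rel smH smV D act"]
lemmas spV_diff = module.span_diff[OF fs_module, of _ "tensV_rel smH smV D act"]
lemmas spV_neg = module.span_neg[OF fs_module, of _ "tensV_rel smH smV D act"]
lemmas spV_base = module.span_base[OF fs_module, of _ "tensV_rel smH smV D act"]
lemmas spV_scale = module.span_scale[OF fs_module, of _ "tensV_rel smH smV D act"]
lemmas spH_zero = module.span_zero[OF fs_module, of "tensH_rel smH"]
lemmas spV_zero' = spV_zero[unfolded zero_fun_def]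
lemmas spH_zero' = spH_zero[unfolded zero_fun_def]
lemmas spH_add = module.span_add[OF fs_module, of _ "tensH_rel smH"]
lemmas spH_diff = module.span_diff[OF fs_module, of _ "tensH_rel smH"]
lemmas spH_neg = module.span_neg[OF fs_module, of _ "tensH_rel smH"]
lemmas spH_base = module.span_base[OF fs_module, of _ "tensH_rel smH"]
lemmas spH_scale = module.span_scale[OF fs_module, of _ "tensH_rel smH"]

lemma tq_def': "X \<approx> Y \<longleftrightarrow> fvec X - fvec Y \<in> SPV" by (simp add: teqV_def)
lemma tqh_def': "tqh X Y \<longleftrightarrow> fvec X - fvec Y \<in> SPH" by (simp add: teqH_def)

lemma tq_refl[simp]: "X \<approx> X" by (simp add: tq_def' spV_zero spV_zero')
lemma tq_eq: "X = Y \<Longrightarrow> X \<approx> Y" by simp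
lemma tq_sym: "tq X Y \<Longrightarrow> tq Y X"
proof -
  assume "tq X Y"
  then have "- (fvec X - fvec Y) \<in> SPV" unfolding tq_def' by (rule spV_neg)
  then show ?thesis unfolding tq_def' by simp
qed
lemma tq_trans[trans]: "tq X Y \<Longrightarrow> tq Y Z \<Longrightarrow> tq X Z"
proof -
  assume "tq X Y" "tq Y Z"
  then have "(fvec X - fvec Y) + (fvec Y - fvec Z) \<in> SPV" unfolding tq_def' by (rule spV_add)
  then show ?thesis unfolding tq_def' by simp
qed
lemma tq_app: "tq X Y \<Longrightarrow> tq Z W \<Longrightarrow> tq (X @ Z) (Y @ W)"
proof -
  assume "tq X Y" "tq Z W"
  then have "(fvec X - fvec Y) + (fvec Z - fvec W) \<in> SPV" unfolding tq_def' by (rule spV_add)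
  then show ?thesis unfolding tq_def' fvec_append by (simp add: algebra_simps)
qed
lemma tq_mset: "mset X = mset Y \<Longrightarrow> X \<approx> Y"
proof -
  assume "mset X = mset Y"
  then have "fvec X = (fvec Y :: 'h list \<times> 'v \<Rightarrow> 'f)" by (rule fvec_mset)
  then show ?thesis by (simp add: tq_def' spV_zero spV_zero')
qed
lemma tq_concat: "(\<And>x. x \<in> set L \<Longrightarrow> F x \<approx> G x) \<Longrightarrow> concat (map F L) \<approx> concat (map G L)"
  by (induction L) (auto intro: tq_app)
lemma tq_trans_eq1[trans]: "X = Y \<Longrightarrow> Y \<approx> Z \<Longrightarrow> X \<approx> Z" by simp
lemma tq_trans_eq2[trans]: "X \<approx> Y \<Longrightarrow> Y = Z \<Longrightarrow> X \<approx> Z" by simp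

lemma tqh_refl[simp]: "tqh X X" by (simp add: tqh_def' spH_zero spH_zero')
lemma tqh_sym: "tqh X Y \<Longrightarrow> tqh Y X"
proof -
  assume "tqh X Y"
  then have "- (fvec X - fvec Y) \<in> SPH" unfolding tqh_def' by (rule spH_neg)
  then show ?thesis unfolding tqh_def' by simp
qed
lemma tqh_trans: "tqh X Y \<Longrightarrow> tqh Y Z \<Longrightarrow> tqh X Z"
proof -
  assume "tqh X Y" "tqh Y Z"
  then have "(fvec X - fvec Y) + (fvec Y - fvec Z) \<in> SPH" unfolding tqh_def' by (rule spH_add)
  then show ?thesis unfolding tqh_def' by simp
qed
lemma tqh_app: "tqh X Y \<Longrightarrow> tqh Z W \<Longrightarrow> tqh (X @ Z) (Y @ W)"
proof -
  assume "tqh X Y" "tqh Z W"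
  then have "(fvec X - fvec Y) + (fvec Z - fvec W) \<in> SPH" unfolding tqh_def' by (rule spH_add)
  then show ?thesis unfolding tqh_def' fvec_append by (simp add: algebra_simps)
qed
lemma tqh_mset: "mset X = mset Y \<Longrightarrow> tqh X Y"
proof -
  assume "mset X = mset Y"
  then have "fvec X = (fvec Y :: 'h list \<Rightarrow> 'f)" by (rule fvec_mset)
  then show ?thesis by (simp add: tqh_def' spH_zero spH_zero')
qed
lemma tqh_concat: "(\<And>x. x \<in> set L \<Longrightarrow> tqh (F x) (G x)) \<Longrightarrow> tqh (concat (map F L)) (concat (map G L))"
  by (induction L) (auto intro: tqh_app)

lemma rel_Hadd: "dlt (xs @ [a + b] @ ys, e) - dlt (xs @ [a] @ ys, e) - dlt (xs @ [b] @ ys, e) \<in> SPV"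
  apply (rule spV_base) unfolding tensV_rel_def apply (rule UnI1, rule UnI1, rule UnI1, rule UnI1) by blast
lemma rel_Hsm: "dlt (xs @ [smH c a] @ ys, e) - fscale c (dlt (xs @ [a] @ ys, e)) \<in> SPV"
  apply (rule spV_base) unfolding tensV_rel_def apply (rule UnI1, rule UnI1, rule UnI1, rule UnI2) by blast
lemma rel_Vadd: "dlt (fs, e + e') - dlt (fs, e) - dlt (fs, e') \<in> SPV"
  apply (rule spV_base) unfolding tensV_rel_def apply (rule UnI1, rule UnI1, rule UnI2) by blast
lemma rel_Vsm: "dlt (fs, smV c e) - fscale c (dlt (fs, e)) \<in> SPV"
  apply (rule spV_base) unfolding tensV_rel_def apply (rule UnI1, rule UnI2) by blast
lemma rel_bal: "fs \<noteq> [] \<Longrightarrow> fvec (map (\<lambda>hs. (map2 (*) fs hs, e)) (coprod_iter D (length fs) h)) - dlt (fs, act h e) \<in> SPV"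
  apply (rule spV_base) unfolding tensV_rel_def apply (rule UnI2) by blast

lemma gen_Hadd: "[(xs @ [a + b] @ ys, e)] \<approx> [(xs @ [a] @ ys, e), (xs @ [b] @ ys, e)]"
  using rel_Hadd[of xs a b ys e] by (simp add: tq_def' fvec_Cons algebra_simps)
lemma gen_Vadd: "[(fs, e + e')] \<approx> [(fs, e), (fs, e')]"
  using rel_Vadd[of fs e e'] by (simp add: tq_def' fvec_Cons algebra_simps)
lemma gen_bal: "fs \<noteq> [] \<Longrightarrow> map (\<lambda>hs. (map2 (*) fs hs, e)) (coprod_iter D (length fs) h) \<approx> [(fs, act h e)]"
  using rel_bal by (simp add: tq_def' fvec_single)

lemma scT_Nil[simp]: "scT smV c [] = []" by (simp add: scT_def)
lemma scT_Cons[simp]: "scT smV c ((fs, e) # L) = (fs, smV c e) # scT smV c L" by (simp add: scT_def)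
lemma scT_append[simp]: "scT smV c (X @ Y) = scT smV c X @ scT smV c Y" by (simp add: scT_def)

lemma fscale_fvec_scT: "fscale c (fvec L) - fvec (scT smV c L) \<in> SPV"
proof (induction L)
  case Nil then show ?case by (simp add: fscale_zero fscale_zero' spV_zero spV_zero')
next
  case (Cons x L)
  obtain fs e where x: "x = (fs, e)" by (cases x)
  have eq: "fscale c (fvec (x # L)) - fvec (scT smV c (x # L)) =
        (fscale c (fvec L) - fvec (scT smV c L)) - (dlt (fs, smV c e) - fscale c (dlt (fs, e)))"
    by (simp add: x fscale_add fvec_Cons algebra_simps)
  show ?case unfolding eq by (rule spV_diff[OF Cons.IH rel_Vsm])
qed

lemma gen_Hsm: "[(xs @ [smH c a] @ ys, e)] \<approx> scT smV c [(xs @ [a] @ ys, e)]"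
proof -
  have eq: "fvec [(xs @ [smH c a] @ ys, e)] - fvec (scT smV c [(xs @ [a] @ ys, e)]) =
    (dlt (xs @ [smH c a] @ ys, e) - fscale c (dlt (xs @ [a] @ ys, e))) +
    (fscale c (fvec [(xs @ [a] @ ys, e)]) - fvec (scT smV c [(xs @ [a] @ ys, e)]))"
    by (simp add: fvec_single)
  show ?thesis unfolding tq_def' eq by (rule spV_add[OF rel_Hsm fscale_fvec_scT])
qed

lemma gen_V0: "[(fs, 0)] \<approx> []"
proof -
  have "dlt (fs, smV 0 e) - fscale 0 (dlt (fs, e)) \<in> SPV" for e by (rule rel_Vsm)
  moreover have "smV 0 e = 0" for e using module.scale_zero_left[OF V_mod] .
  moreover have "fscale 0 v = 0" for v :: "'h list \<times> 'v \<Rightarrow> 'f" by (simp add: fscale_def fun_eq_iff)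
  ultimately show ?thesis by (simp add: tq_def' fvec_single)
qed

lemma gen_sum: "map (\<lambda>x. (fs, g x)) L \<approx> [(fs, sum_list (map g L))]"
proof (induction L)
  case Nil then show ?case using gen_V0 tq_sym by simp
next
  case (Cons x L)
  have "map (\<lambda>x. (fs, g x)) (x # L) = [(fs, g x)] @ map (\<lambda>x. (fs, g x)) L" by simp
  also have "\<dots> \<approx> [(fs, g x)] @ [(fs, sum_list (map g L))]" by (rule tq_app[OF tq_refl Cons])
  also have "\<dots> \<approx> [(fs, g x + sum_list (map g L))]" using gen_Vadd tq_sym by simp
  finally show ?case by simp
qed

end

context PP
begin

lemma Lin_fvec_V: "Lin fscale (\<lambda>x. fvec (\<phi> x) :: 'a \<Rightarrow> 'f) (fvec X) = fvec (concat (map \<phi> X))"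
  by (simp add: Lin_fvec[OF fs_module] sum_list_fvec)

lemma tq_lift:
  fixes \<phi> :: "'h list \<times> 'v \<Rightarrow> ('h list \<times> 'v) list"
  assumes O1: "\<And>xs a b ys e. \<phi> (xs @ [a + b] @ ys, e) \<approx> \<phi> (xs @ [a] @ ys, e) @ \<phi> (xs @ [b] @ ys, e)"
  and O2: "\<And>xs c a ys e. \<phi> (xs @ [smH c a] @ ys, e) \<approx> scT smV c (\<phi> (xs @ [a] @ ys, e))"
  and O3: "\<And>fs e e'. \<phi> (fs, e + e') \<approx> \<phi> (fs, e) @ \<phi> (fs, e')"
  and O4: "\<And>fs c e. \<phi> (fs, smV c e) \<approx> scT smV c (\<phi> (fs, e))"
  and O5: "\<And>fs h e. fs \<noteq> [] \<Longrightarrow> concat (map (\<lambda>hs. \<phi> (map2 (*) fs hs, e)) (coprod_iter D (length fs) h)) \<approx> \<phi> (fs, act h e)"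
  and XY: "X \<approx> Y"
  shows "concat (map \<phi> X) \<approx> concat (map \<phi> Y)"
proof -
  let ?g = "\<lambda>x. fvec (\<phi> x) :: 'h list \<times> 'v \<Rightarrow> 'f"
  have M: "module (fscale :: 'f \<Rightarrow> ('h list \<times> 'v \<Rightarrow> 'f) \<Rightarrow> _)" by (rule fs_module)
  have U: "module.subspace fscale SPV" by (rule module.subspace_span[OF fs_module])
  have sc: "fscale c (fvec (\<phi> x)) - fvec (scT smV c (\<phi> x)) \<in> SPV" for c x by (rule fscale_fvec_scT)
  have R: "finite (spt r) \<and> Lin fscale ?g r \<in> SPV" if r: "r \<in> tensV_rel smH smV D act" for r
  proof -
    from r consider
      (A) xs a b ys e where "r = dlt (xs @ [a + b] @ ys, e) - dlt (xs @ [a] @ ys, e) - dlt (xs @ [b] @ ys, e)"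
    | (B) xs c a ys e where "r = dlt (xs @ [smH c a] @ ys, e) - fscale c (dlt (xs @ [a] @ ys, e))"
    | (C) fs e e' where "r = dlt (fs, e + e') - dlt (fs, e) - dlt (fs, e')"
    | (Dd) fs c e where "r = dlt (fs, smV c e) - fscale c (dlt (fs, e))"
    | (E) fs h e where "r = fvec (map (\<lambda>hs. (map2 (*) fs hs, e)) (coprod_iter D (length fs) h)) - dlt (fs, act h e)" "fs \<noteq> []"
      unfolding tensV_rel_def by blast
    then show ?thesis
    proof cases
      case A
      have fin: "finite (spt r)" unfolding A by simp
      have "Lin fscale ?g r = fvec (\<phi> (xs @ [a + b] @ ys, e)) - fvec (\<phi> (xs @ [a] @ ys, e)) - fvec (\<phi> (xs @ [b] @ ys, e))"
        unfolding A by (simp add: Lin_diff[OF M] Lin_dlt[OF M])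
      also have "\<dots> = fvec (\<phi> (xs @ [a + b] @ ys, e)) - fvec (\<phi> (xs @ [a] @ ys, e) @ \<phi> (xs @ [b] @ ys, e))" by (simp add: fvec_append diff_diff_eq)
      finally show ?thesis using O1[of xs a b ys e] fin unfolding tq_def' by (simp only:)
    next
      case B
      have fin: "finite (spt r)" unfolding B by simp
      have "Lin fscale ?g r = (fvec (\<phi> (xs @ [smH c a] @ ys, e)) - fvec (scT smV c (\<phi> (xs @ [a] @ ys, e))))
          - (fscale c (fvec (\<phi> (xs @ [a] @ ys, e))) - fvec (scT smV c (\<phi> (xs @ [a] @ ys, e))))"
        unfolding B by (simp add: Lin_diff[OF M] Lin_dlt[OF M] Lin_fscale[OF M])
      then show ?thesis using spV_diff[OF O2[of xs c a ys e, unfolded tq_def'] sc] fin by (simp only:)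
    next
      case C
      have fin: "finite (spt r)" unfolding C by simp
      have "Lin fscale ?g r = fvec (\<phi> (fs, e + e')) - fvec (\<phi> (fs, e)) - fvec (\<phi> (fs, e'))"
        unfolding C by (simp add: Lin_diff[OF M] Lin_dlt[OF M])
      also have "\<dots> = fvec (\<phi> (fs, e + e')) - fvec (\<phi> (fs, e) @ \<phi> (fs, e'))" by (simp add: fvec_append diff_diff_eq)
      finally show ?thesis using O3[of fs e e'] fin unfolding tq_def' by (simp only:)
    next
      case Dd
      have fin: "finite (spt r)" unfolding Dd by simp
      have "Lin fscale ?g r = (fvec (\<phi> (fs, smV c e)) - fvec (scT smV c (\<phi> (fs, e))))
          - (fscale c (fvec (\<phi> (fs, e))) - fvec (scT smV c (\<phi> (fs, e))))"
        unfolding Dd by (simp add: Lin_diff[OF M] Lin_dlt[OF M] Lin_fscale[OF M])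
      then show ?thesis using spV_diff[OF O4[of fs c e, unfolded tq_def'] sc] fin by (simp only:)
    next
      case E
      have fin: "finite (spt r)" unfolding E by simp
      have "Lin fscale ?g r = fvec (concat (map (\<lambda>hs. \<phi> (map2 (*) fs hs, e)) (coprod_iter D (length fs) h))) - fvec (\<phi> (fs, act h e))"
        unfolding E(1) by (simp add: Lin_diff[OF M] Lin_dlt[OF M] Lin_fvec_V o_def)
      then show ?thesis using O5[OF E(2), of e h] fin unfolding tq_def' by (simp only:)
    qed
  qed
  have "finite (spt (fvec X - fvec Y :: _ \<Rightarrow> 'f)) \<and> Lin fscale ?g (fvec X - fvec Y) \<in> SPV"
    by (rule span_lift[OF M U R XY[unfolded tq_def']])
  moreover have "Lin fscale ?g (fvec X - fvec Y) = fvec (concat (map \<phi> X)) - fvec (concat (map \<phi> Y))"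
    by (simp add: Lin_diff[OF M] Lin_fvec_V)
  ultimately show ?thesis unfolding tq_def' by simp
qed

lemma tqh_liftV:
  fixes \<psi> :: "'h list \<Rightarrow> ('h list \<times> 'v) list"
  assumes Q1: "\<And>xs a b ys. \<psi> (xs @ [a + b] @ ys) \<approx> \<psi> (xs @ [a] @ ys) @ \<psi> (xs @ [b] @ ys)"
  and Q2: "\<And>xs c a ys. \<psi> (xs @ [smH c a] @ ys) \<approx> scT smV c (\<psi> (xs @ [a] @ ys))"
  and XY: "tqh X Y"
  shows "concat (map \<psi> X) \<approx> concat (map \<psi> Y)"
proof -
  let ?g = "\<lambda>x. fvec (\<psi> x) :: 'h list \<times> 'v \<Rightarrow> 'f"
  have M: "module (fscale :: 'f \<Rightarrow> ('h list \<times> 'v \<Rightarrow> 'f) \<Rightarrow> _)" by (rule fs_module)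
  have U: "module.subspace fscale SPV" by (rule module.subspace_span[OF fs_module])
  have sc: "fscale c (fvec (\<psi> x)) - fvec (scT smV c (\<psi> x)) \<in> SPV" for c x by (rule fscale_fvec_scT)
  have R: "finite (spt r) \<and> Lin fscale ?g r \<in> SPV" if r: "r \<in> tensH_rel smH" for r
  proof -
    from r consider
      (A) xs a b ys where "r = dlt (xs @ [a + b] @ ys) - dlt (xs @ [a] @ ys) - dlt (xs @ [b] @ ys)"
    | (B) xs c a ys where "r = dlt (xs @ [smH c a] @ ys) - fscale c (dlt (xs @ [a] @ ys))"
      unfolding tensH_rel_def by blast
    then show ?thesis
    proof cases
      case A
      have fin: "finite (spt r)" unfolding A by simp
      have "Lin fscale ?g r = fvec (\<psi> (xs @ [a + b] @ ys)) - fvec (\<psi> (xs @ [a] @ ys)) - fvec (\<psi> (xs @ [b] @ ys))"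
        unfolding A by (simp add: Lin_diff[OF M] Lin_dlt[OF M])
      also have "\<dots> = fvec (\<psi> (xs @ [a + b] @ ys)) - fvec (\<psi> (xs @ [a] @ ys) @ \<psi> (xs @ [b] @ ys))" by (simp add: fvec_append diff_diff_eq)
      finally show ?thesis using Q1[of xs a b ys] fin unfolding tq_def' by (simp only:)
    next
      case B
      have fin: "finite (spt r)" unfolding B by simp
      have "Lin fscale ?g r = (fvec (\<psi> (xs @ [smH c a] @ ys)) - fvec (scT smV c (\<psi> (xs @ [a] @ ys))))
          - (fscale c (fvec (\<psi> (xs @ [a] @ ys))) - fvec (scT smV c (\<psi> (xs @ [a] @ ys))))"
        unfolding B by (simp add: Lin_diff[OF M] Lin_dlt[OF M] Lin_fscale[OF M])
      then show ?thesis using spV_diff[OF Q2[of xs c a ys, unfolded tq_def'] sc] fin by (simp only:)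
    qed
  qed
  have "finite (spt (fvec X - fvec Y :: _ \<Rightarrow> 'f)) \<and> Lin fscale ?g (fvec X - fvec Y) \<in> SPV"
    by (rule span_lift[OF M U R XY[unfolded tqh_def']])
  moreover have "Lin fscale ?g (fvec X - fvec Y) = fvec (concat (map \<psi> X)) - fvec (concat (map \<psi> Y))"
    by (simp add: Lin_diff[OF M] Lin_fvec_V)
  ultimately show ?thesis unfolding tq_def' by simp
qed

lemma tqh_liftH:
  fixes \<psi> :: "'h list \<Rightarrow> 'h list list"
  assumes Q1: "\<And>xs a b ys. tqh (\<psi> (xs @ [a + b] @ ys)) (\<psi> (xs @ [a] @ ys) @ \<psi> (xs @ [b] @ ys))"
  and Q2: "\<And>xs c a ys. fvec (\<psi> (xs @ [smH c a] @ ys)) - fscale c (fvec (\<psi> (xs @ [a] @ ys))) \<in> SPH"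
  and XY: "tqh X Y"
  shows "tqh (concat (map \<psi> X)) (concat (map \<psi> Y))"
proof -
  let ?g = "\<lambda>x. fvec (\<psi> x) :: 'h list \<Rightarrow> 'f"
  have M: "module (fscale :: 'f \<Rightarrow> ('h list \<Rightarrow> 'f) \<Rightarrow> _)" by (rule fs_module)
  have U: "module.subspace fscale SPH" by (rule module.subspace_span[OF fs_module])
  have R: "finite (spt r) \<and> Lin fscale ?g r \<in> SPH" if r: "r \<in> tensH_rel smH" for r
  proof -
    from r consider
      (A) xs a b ys where "r = dlt (xs @ [a + b] @ ys) - dlt (xs @ [a] @ ys) - dlt (xs @ [b] @ ys)"
    | (B) xs c a ys where "r = dlt (xs @ [smH c a] @ ys) - fscale c (dlt (xs @ [a] @ ys))"
      unfolding tensH_rel_def by blast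
    then show ?thesis
    proof cases
      case A
      have fin: "finite (spt r)" unfolding A by simp
      have "Lin fscale ?g r = fvec (\<psi> (xs @ [a + b] @ ys)) - fvec (\<psi> (xs @ [a] @ ys)) - fvec (\<psi> (xs @ [b] @ ys))"
        unfolding A by (simp add: Lin_diff[OF M] Lin_dlt[OF M])
      also have "\<dots> = fvec (\<psi> (xs @ [a + b] @ ys)) - fvec (\<psi> (xs @ [a] @ ys) @ \<psi> (xs @ [b] @ ys))" by (simp add: fvec_append diff_diff_eq)
      finally show ?thesis using Q1[of xs a b ys] fin unfolding tqh_def' by (simp only:)
    next
      case B
      have fin: "finite (spt r)" unfolding B by simp
      have "Lin fscale ?g r = fvec (\<psi> (xs @ [smH c a] @ ys)) - fscale c (fvec (\<psi> (xs @ [a] @ ys)))"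
        unfolding B by (simp add: Lin_diff[OF M] Lin_dlt[OF M] Lin_fscale[OF M])
      then show ?thesis using Q2[of xs c a ys] fin by (simp only:)
    qed
  qed
  have "finite (spt (fvec X - fvec Y :: _ \<Rightarrow> 'f)) \<and> Lin fscale ?g (fvec X - fvec Y) \<in> SPH"
    by (rule span_lift[OF M U R XY[unfolded tqh_def']])
  moreover have "Lin fscale ?g (fvec X - fvec Y) = fvec (concat (map \<psi> X)) - fvec (concat (map \<psi> Y))"
    by (simp add: Lin_diff[OF M] Lin_fvec_V)
  ultimately show ?thesis unfolding tqh_def' by simp
qed

lemma eval_lift:
  fixes g :: "'h list \<Rightarrow> 'w::ab_group_add"
  assumes M: "module smW"
  and E1: "\<And>xs a b ys. g (xs @ [a + b] @ ys) = g (xs @ [a] @ ys) + g (xs @ [b] @ ys)"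
  and E2: "\<And>xs c a ys. g (xs @ [smH c a] @ ys) = smW c (g (xs @ [a] @ ys))"
  and XY: "tqh X Y"
  shows "sum_list (map g X) = sum_list (map g Y)"
proof -
  have U: "module.subspace smW {0}" by (rule module.subspace_single_0[OF M])
  have R: "finite (spt r) \<and> Lin smW g r \<in> {0}" if r: "r \<in> tensH_rel smH" for r
  proof -
    from r consider
      (A) xs a b ys where "r = dlt (xs @ [a + b] @ ys) - dlt (xs @ [a] @ ys) - dlt (xs @ [b] @ ys)"
    | (B) xs c a ys where "r = dlt (xs @ [smH c a] @ ys) - fscale c (dlt (xs @ [a] @ ys))"
      unfolding tensH_rel_def by blast
    then show ?thesis
    proof cases
      case A
      have fin: "finite (spt r)" unfolding A by simp
      have "Lin smW g r = g (xs @ [a + b] @ ys) - g (xs @ [a] @ ys) - g (xs @ [b] @ ys)"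
        unfolding A by (simp add: Lin_diff[OF M] Lin_dlt[OF M])
      then show ?thesis using E1[of xs a b ys] fin by simp
    next
      case B
      have fin: "finite (spt r)" unfolding B by simp
      have "Lin smW g r = g (xs @ [smH c a] @ ys) - smW c (g (xs @ [a] @ ys))"
        unfolding B by (simp add: Lin_diff[OF M] Lin_dlt[OF M] Lin_fscale[OF M])
      then show ?thesis using E2[of xs c a ys] fin by simp
    qed
  qed
  have "finite (spt (fvec X - fvec Y :: 'h list \<Rightarrow> 'f)) \<and> Lin smW g (fvec X - fvec Y :: 'h list \<Rightarrow> 'f) \<in> {0}"
    by (rule span_lift[OF M U R XY[unfolded tqh_def']])
  moreover have "Lin smW g (fvec X - fvec Y :: 'h list \<Rightarrow> 'f) = sum_list (map g X) - sum_list (map g Y)"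
    by (simp add: Lin_diff[OF M] Lin_fvec[OF M])
  ultimately show ?thesis by simp
qed

end

lemma len2_cases:
  assumes "length (xs @ [a] @ ys) = 2"
  obtains y where "xs = []" "ys = [y]" | x where "xs = [x]" "ys = []"
proof -
  have "length xs + length ys = 1" using assms by simp
  then show thesis using that by (cases xs; cases ys) auto
qed

lemma len3_cases:
  assumes "length (xs @ [a] @ ys) = 3"
  obtains y z where "xs = []" "ys = [y, z]" | x z where "xs = [x]" "ys = [z]" | x y where "xs = [x, y]" "ys = []"
proof -
  have "length xs + length ys = 2" using assms by simp
  then show thesis using that
    by (cases xs; cases ys) (auto simp: length_Suc_conv)
qed

lemma sum_list_map_concat: "sum_list (map g (concat L)) = sum_list (map (\<lambda>l. sum_list (map g l)) L)"
  by (induction L) auto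

lemma sum_list_add_distr: "(\<Sum>j\<leftarrow>B. f j + g j) = (\<Sum>j\<leftarrow>B. f j) + (\<Sum>j\<leftarrow>B. (g j :: 'a::comm_monoid_add))"
  by (induction B) (simp_all add: algebra_simps)

lemma sum_list_swap:
  "sum_list (map (\<lambda>i. sum_list (map (f i) B)) A) = (sum_list (map (\<lambda>j. sum_list (map (\<lambda>i. f i j) A)) B) :: 'a::comm_monoid_add)"
  by (induction A) (simp_all add: sum_list_add_distr)

lemma concat_map_concat: "concat (map g (concat L)) = concat (map (\<lambda>l. concat (map g l)) L)"
  by (induction L) auto

context PP
begin

definition ev2 :: "('h \<Rightarrow> 'h \<Rightarrow> 'w::ab_group_add) \<Rightarrow> 'h list \<Rightarrow> 'w" where
  "ev2 F l = (if length l = 2 then F (l ! 0) (l ! 1) else 0)"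
definition ev3 :: "('h \<Rightarrow> 'h \<Rightarrow> 'h \<Rightarrow> 'w::ab_group_add) \<Rightarrow> 'h list \<Rightarrow> 'w" where
  "ev3 F l = (if length l = 3 then F (l ! 0) (l ! 1) (l ! 2) else 0)"
definition ps2 :: "('h \<Rightarrow> 'h \<Rightarrow> ('h list \<times> 'v) list) \<Rightarrow> 'h list \<Rightarrow> ('h list \<times> 'v) list" where
  "ps2 F l = (if length l = 2 then F (l ! 0) (l ! 1) else [])"
definition ps3 :: "('h \<Rightarrow> 'h \<Rightarrow> 'h \<Rightarrow> ('h list \<times> 'v) list) \<Rightarrow> 'h list \<Rightarrow> ('h list \<times> 'v) list" where
  "ps3 F l = (if length l = 3 then F (l ! 0) (l ! 1) (l ! 2) else [])"

definition bi :: "('f \<Rightarrow> 'w \<Rightarrow> 'w) \<Rightarrow> ('h \<Rightarrow> 'h \<Rightarrow> 'w::ab_group_add) \<Rightarrow> bool" where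
  "bi smW F \<longleftrightarrow> (\<forall>x x' y. F (x + x') y = F x y + F x' y) \<and> (\<forall>x y y'. F x (y + y') = F x y + F x y')
     \<and> (\<forall>c x y. F (smH c x) y = smW c (F x y)) \<and> (\<forall>c x y. F x (smH c y) = smW c (F x y))"
definition tri :: "('f \<Rightarrow> 'w \<Rightarrow> 'w) \<Rightarrow> ('h \<Rightarrow> 'h \<Rightarrow> 'h \<Rightarrow> 'w::ab_group_add) \<Rightarrow> bool" where
  "tri smW F \<longleftrightarrow> (\<forall>x x' y z. F (x + x') y z = F x y z + F x' y z) \<and> (\<forall>x y y' z. F x (y + y') z = F x y z + F x y' z)
     \<and> (\<forall>x y z z'. F x y (z + z') = F x y z + F x y z')
     \<and> (\<forall>c x y z. F (smH c x) y z = smW c (F x y z)) \<and> (\<forall>c x y z. F x (smH c y) z = smW c (F x y z))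
     \<and> (\<forall>c x y z. F x y (smH c z) = smW c (F x y z))"
definition biV :: "('h \<Rightarrow> 'h \<Rightarrow> ('h list \<times> 'v) list) \<Rightarrow> bool" where
  "biV F \<longleftrightarrow> (\<forall>x x' y. F (x + x') y \<approx> F x y @ F x' y) \<and> (\<forall>x y y'. F x (y + y') \<approx> F x y @ F x y')
     \<and> (\<forall>c x y. F (smH c x) y \<approx> scT smV c (F x y)) \<and> (\<forall>c x y. F x (smH c y) \<approx> scT smV c (F x y))"
definition triV :: "('h \<Rightarrow> 'h \<Rightarrow> 'h \<Rightarrow> ('h list \<times> 'v) list) \<Rightarrow> bool" where
  "triV F \<longleftrightarrow> (\<forall>x x' y z. F (x + x') y z \<approx> F x y z @ F x' y z) \<and> (\<forall>x y y' z. F x (y + y') z \<approx> F x y z @ F x y' z)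
     \<and> (\<forall>x y z z'. F x y (z + z') \<approx> F x y z @ F x y z')
     \<and> (\<forall>c x y z. F (smH c x) y z \<approx> scT smV c (F x y z)) \<and> (\<forall>c x y z. F x (smH c y) z \<approx> scT smV c (F x y z))
     \<and> (\<forall>c x y z. F x y (smH c z) \<approx> scT smV c (F x y z))"

lemma eval2:
  assumes M: "module smW" and B: "bi smW F" and XY: "tqh X Y"
  shows "sum_list (map (ev2 F) X) = sum_list (map (ev2 F) Y)"
proof (rule eval_lift[OF M _ _ XY])
  fix xs a b ys
  show "ev2 F (xs @ [a + b] @ ys) = ev2 F (xs @ [a] @ ys) + ev2 F (xs @ [b] @ ys)"
  proof (cases "length (xs @ [a] @ ys) = 2")
    case True
    then show ?thesis using B by (cases rule: len2_cases) (auto simp: ev2_def bi_def)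
  qed (simp add: ev2_def)
next
  fix xs c a ys
  show "ev2 F (xs @ [smH c a] @ ys) = smW c (ev2 F (xs @ [a] @ ys))"
  proof (cases "length (xs @ [a] @ ys) = 2")
    case True
    then show ?thesis using B by (cases rule: len2_cases) (auto simp: ev2_def bi_def)
  qed (simp add: ev2_def module.scale_zero_right[OF M])
qed

lemma eval3:
  assumes M: "module smW" and B: "tri smW F" and XY: "tqh X Y"
  shows "sum_list (map (ev3 F) X) = sum_list (map (ev3 F) Y)"
proof (rule eval_lift[OF M _ _ XY])
  fix xs a b ys
  show "ev3 F (xs @ [a + b] @ ys) = ev3 F (xs @ [a] @ ys) + ev3 F (xs @ [b] @ ys)"
  proof (cases "length (xs @ [a] @ ys) = 3")
    case True
    then show ?thesis using B by (cases rule: len3_cases) (auto simp: ev3_def tri_def)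
  qed (simp add: ev3_def)
next
  fix xs c a ys
  show "ev3 F (xs @ [smH c a] @ ys) = smW c (ev3 F (xs @ [a] @ ys))"
  proof (cases "length (xs @ [a] @ ys) = 3")
    case True
    then show ?thesis using B by (cases rule: len3_cases) (auto simp: ev3_def tri_def)
  qed (simp add: ev3_def module.scale_zero_right[OF M])
qed

lemma lift2:
  assumes B: "biV F" and XY: "tqh X Y"
  shows "concat (map (ps2 F) X) \<approx> concat (map (ps2 F) Y)"
proof (rule tqh_liftV[OF _ _ XY])
  fix xs a b ys
  show "ps2 F (xs @ [a + b] @ ys) \<approx> ps2 F (xs @ [a] @ ys) @ ps2 F (xs @ [b] @ ys)"
  proof (cases "length (xs @ [a] @ ys) = 2")
    case True
    then show ?thesis using B by (cases rule: len2_cases) (auto simp: ps2_def biV_def)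
  qed (simp add: ps2_def)
next
  fix xs c a ys
  show "ps2 F (xs @ [smH c a] @ ys) \<approx> scT smV c (ps2 F (xs @ [a] @ ys))"
  proof (cases "length (xs @ [a] @ ys) = 2")
    case True
    then show ?thesis using B by (cases rule: len2_cases) (auto simp: ps2_def biV_def)
  qed (simp add: ps2_def)
qed

lemma lift3:
  assumes B: "triV F" and XY: "tqh X Y"
  shows "concat (map (ps3 F) X) \<approx> concat (map (ps3 F) Y)"
proof (rule tqh_liftV[OF _ _ XY])
  fix xs a b ys
  show "ps3 F (xs @ [a + b] @ ys) \<approx> ps3 F (xs @ [a] @ ys) @ ps3 F (xs @ [b] @ ys)"
  proof (cases "length (xs @ [a] @ ys) = 3")
    case True
    then show ?thesis using B by (cases rule: len3_cases) (auto simp: ps3_def triV_def)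
  qed (simp add: ps3_def)
next
  fix xs c a ys
  show "ps3 F (xs @ [smH c a] @ ys) \<approx> scT smV c (ps3 F (xs @ [a] @ ys))"
  proof (cases "length (xs @ [a] @ ys) = 3")
    case True
    then show ?thesis using B by (cases rule: len3_cases) (auto simp: ps3_def triV_def)
  qed (simp add: ps3_def)
qed

end

context PP
begin

lemma S_zero[simp]: "S 0 = 0"
  using S_add[of 0 0] by simp
lemma S_sum: "S (\<Sum>x\<leftarrow>L. f x) = (\<Sum>x\<leftarrow>L. S (f x))"
  by (induction L) (simp_all add: S_add)
lemma smH_zero_right[simp]: "smH c 0 = 0" by (rule module.scale_zero_right[OF H_mod])
lemma smH_zero_left[simp]: "smH 0 x = 0" by (rule module.scale_zero_left[OF H_mod])
lemma smH_one[simp]: "smH 1 x = x" by (rule module.scale_one[OF H_mod])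
lemma smH_scale[simp]: "smH a (smH b x) = smH (a * b) x" by (rule module.scale_scale[OF H_mod])
lemma smH_add: "smH c (x + y) = smH c x + smH c y" by (rule module.scale_right_distrib[OF H_mod])
lemma smH_sum: "smH c (\<Sum>x\<leftarrow>L. f x) = (\<Sum>x\<leftarrow>L. smH c (f x))"
  by (induction L) (simp_all add: smH_add)
lemma smV_zero_right[simp]: "smV c 0 = 0" by (rule module.scale_zero_right[OF V_mod])
lemma smV_zero_left[simp]: "smV 0 x = 0" by (rule module.scale_zero_left[OF V_mod])
lemma smV_one[simp]: "smV 1 x = x" by (rule module.scale_one[OF V_mod])
lemma smV_scale[simp]: "smV a (smV b x) = smV (a * b) x" by (rule module.scale_scale[OF V_mod])
lemma smV_add: "smV c (x + y) = smV c x + smV c y" by (rule module.scale_right_distrib[OF V_mod])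
lemma smV_sum: "smV c (\<Sum>x\<leftarrow>L. f x) = (\<Sum>x\<leftarrow>L. smV c (f x))"
  by (induction L) (simp_all add: smV_add)
lemma act_zero1[simp]: "act 0 v = 0" using act_add1[of 0 0 v] by simp
lemma act_zero2[simp]: "act h 0 = 0" using act_add2[of h 0 0] by simp
lemma act_sum1: "act (\<Sum>x\<leftarrow>L. f x) v = (\<Sum>x\<leftarrow>L. act (f x) v)"
  by (induction L) (simp_all add: act_add1)
lemma act_sum2: "act h (\<Sum>x\<leftarrow>L. f x) = (\<Sum>x\<leftarrow>L. act h (f x))"
  by (induction L) (simp_all add: act_add2)
lemma mul_zero1[simp]: "mul 0 v = 0" using mul_add1[of 0 0 v] by simp
lemma mul_zero2[simp]: "mul v 0 = 0" using mul_add2[of v 0 0] by simp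
lemma mul_sum1: "mul (\<Sum>x\<leftarrow>L. f x) v = (\<Sum>x\<leftarrow>L. mul (f x) v)"
  by (induction L) (simp_all add: mul_add1)
lemma mul_sum2: "mul v (\<Sum>x\<leftarrow>L. f x) = (\<Sum>x\<leftarrow>L. mul v (f x))"
  by (induction L) (simp_all add: mul_add2)
lemma eps_zero[simp]: "eps 0 = 0" using eps_add[of 0 0] by simp
lemma H_smultL: "smH c x * y = smH c (x * y)" by (simp add: H_smult1)
lemma H_smultR: "x * smH c y = smH c (x * y)" by (simp add: H_smult2)
lemma S_one_sm: "S (smH c 1) = smH c (S 1)" by (rule S_sm)

definition D3R :: "'h \<Rightarrow> 'h list list" where
  "D3R h = [[a1, a2, b]. (a, b) \<leftarrow> D h, (a1, a2) \<leftarrow> D a]"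
definition D3L :: "'h \<Rightarrow> 'h list list" where
  "D3L h = [[a, b1, b2]. (a, b) \<leftarrow> D h, (b1, b2) \<leftarrow> D b]"

lemma coassoc': "tqh (D3L h) (D3R h)"
  unfolding D3L_def D3R_def by (rule coassoc)

lemma sum_D3R: "sum_list (map (ev3 F) (D3R h)) = (\<Sum>(a, b)\<leftarrow>D h. \<Sum>(a1, a2)\<leftarrow>D a. F a1 a2 b)"
  unfolding D3R_def by (simp add: sum_list_map_concat ev3_def split_def o_def)
lemma sum_D3L: "sum_list (map (ev3 F) (D3L h)) = (\<Sum>(a, b)\<leftarrow>D h. \<Sum>(b1, b2)\<leftarrow>D b. F a b1 b2)"
  unfolding D3L_def by (simp add: sum_list_map_concat ev3_def split_def o_def)
lemma sum_pl: "sum_list (map (ev2 F) (pl L)) = (\<Sum>(a, b)\<leftarrow>L. F a b)"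
  unfolding pl_def by (simp add: ev2_def split_def o_def)
lemma cc_D3R: "concat (map (ps3 F) (D3R h)) = concat (map (\<lambda>(a, b). concat (map (\<lambda>(a1, a2). F a1 a2 b) (D a))) (D h))"
  unfolding D3R_def by (simp add: concat_map_concat ps3_def split_def o_def)
lemma cc_D3L: "concat (map (ps3 F) (D3L h)) = concat (map (\<lambda>(a, b). concat (map (\<lambda>(b1, b2). F a b1 b2) (D b))) (D h))"
  unfolding D3L_def by (simp add: concat_map_concat ps3_def split_def o_def)
lemma cc_pl: "concat (map (ps2 F) (pl L)) = concat (map (\<lambda>(a, b). F a b) L)"
  unfolding pl_def by (simp add: ps2_def split_def o_def)

lemma swap_eval:
  assumes M: "module smW" and T: "tri smW F"
  shows "(\<Sum>(a, b)\<leftarrow>D h. \<Sum>(a1, a2)\<leftarrow>D a. F a1 a2 b) = (\<Sum>(a, b)\<leftarrow>D h. \<Sum>(a1, a2)\<leftarrow>D a. F a1 b a2)"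
proof -
  let ?F' = "\<lambda>x y z. F x z y"
  have T': "tri smW ?F'" using T unfolding tri_def by simp
  have "(\<Sum>(a, b)\<leftarrow>D h. \<Sum>(a1, a2)\<leftarrow>D a. F a1 a2 b) = sum_list (map (ev3 F) (D3R h))"
    by (simp add: sum_D3R)
  also have "\<dots> = sum_list (map (ev3 F) (D3L h))"
    by (rule eval3[OF M T tqh_sym[OF coassoc']])
  also have "\<dots> = (\<Sum>(a, b)\<leftarrow>D h. \<Sum>(b1, b2)\<leftarrow>D b. F a b1 b2)" by (simp add: sum_D3L)
  also have "\<dots> = (\<Sum>(a, b)\<leftarrow>D h. \<Sum>(b1, b2)\<leftarrow>D b. F a b2 b1)"
  proof (rule arg_cong[where f = sum_list], rule map_cong[OF refl], clarify)
    fix a b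
    have B: "bi smW (F a)" using T unfolding tri_def bi_def by simp
    have "(\<Sum>(b1, b2)\<leftarrow>D b. F a b1 b2) = sum_list (map (ev2 (F a)) (pl (D b)))" by (simp add: sum_pl)
    also have "\<dots> = sum_list (map (ev2 (F a)) (pl (map (\<lambda>(a, b). (b, a)) (D b))))"
      by (rule eval2[OF M B cocomm])
    also have "\<dots> = (\<Sum>(b1, b2)\<leftarrow>D b. F a b2 b1)" by (simp add: sum_pl split_def o_def)
    finally show "(\<Sum>(b1, b2)\<leftarrow>D b. F a b1 b2) = (\<Sum>(b1, b2)\<leftarrow>D b. F a b2 b1)" .
  qed
  also have "\<dots> = sum_list (map (ev3 ?F') (D3L h))" by (simp add: sum_D3L)
  also have "\<dots> = sum_list (map (ev3 ?F') (D3R h))"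
    by (rule eval3[OF M T' coassoc'])
  also have "\<dots> = (\<Sum>(a, b)\<leftarrow>D h. \<Sum>(a1, a2)\<leftarrow>D a. F a1 b a2)" by (simp add: sum_D3R)
  finally show ?thesis .
qed

lemma swap_V:
  assumes T: "triV F"
  shows "concat (map (\<lambda>(a, b). concat (map (\<lambda>(a1, a2). F a1 a2 b) (D a))) (D h))
       \<approx> concat (map (\<lambda>(a, b). concat (map (\<lambda>(a1, a2). F a1 b a2) (D a))) (D h))"
proof -
  let ?F' = "\<lambda>x y z. F x z y"
  have T': "triV ?F'" using T unfolding triV_def by simp
  have "concat (map (\<lambda>(a, b). concat (map (\<lambda>(a1, a2). F a1 a2 b) (D a))) (D h)) = concat (map (ps3 F) (D3R h))"
    by (simp add: cc_D3R)
  also have "\<dots> \<approx> concat (map (ps3 F) (D3L h))"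
    by (rule lift3[OF T tqh_sym[OF coassoc']])
  also have "\<dots> = concat (map (\<lambda>(a, b). concat (map (\<lambda>(b1, b2). F a b1 b2) (D b))) (D h))" by (simp add: cc_D3L)
  also have "\<dots> \<approx> concat (map (\<lambda>(a, b). concat (map (\<lambda>(b1, b2). F a b2 b1) (D b))) (D h))"
  proof (rule tq_concat, clarify)
    fix a b
    have B: "biV (F a)" using T unfolding triV_def biV_def by simp
    have "concat (map (\<lambda>(b1, b2). F a b1 b2) (D b)) = concat (map (ps2 (F a)) (pl (D b)))" by (simp add: cc_pl)
    also have "\<dots> \<approx> concat (map (ps2 (F a)) (pl (map (\<lambda>(a, b). (b, a)) (D b))))"
      by (rule lift2[OF B cocomm])
    also have "\<dots> = concat (map (\<lambda>(b1, b2). F a b2 b1) (D b))" by (simp add: cc_pl split_def o_def)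
    finally show "concat (map (\<lambda>(b1, b2). F a b1 b2) (D b)) \<approx> concat (map (\<lambda>(b1, b2). F a b2 b1) (D b))" .
  qed
  also have "\<dots> = concat (map (ps3 ?F') (D3L h))" by (simp add: cc_D3L)
  also have "\<dots> \<approx> concat (map (ps3 ?F') (D3R h))"
    by (rule lift3[OF T' coassoc'])
  also have "\<dots> = concat (map (\<lambda>(a, b). concat (map (\<lambda>(a1, a2). F a1 b a2) (D a))) (D h))" by (simp add: cc_D3R)
  finally show ?thesis .
qed

end

context PP
begin

lemma bi_Smul: "bi smH (\<lambda>u v. S u * v)"
  unfolding bi_def by (simp add: S_add S_sm distrib_left distrib_right H_smultL H_smultR)

lemma anti_prod: "(\<Sum>(a1, a2)\<leftarrow>D a. \<Sum>(c1, c2)\<leftarrow>D c. S (a1 * c1) * (a2 * c2)) = smH (eps a * eps c) 1"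
proof -
  have "(\<Sum>(a1, a2)\<leftarrow>D a. \<Sum>(c1, c2)\<leftarrow>D c. S (a1 * c1) * (a2 * c2))
      = sum_list (map (ev2 (\<lambda>u v. S u * v)) [[a1 * c1, b1 * d1]. (a1, b1) \<leftarrow> D a, (c1, d1) \<leftarrow> D c])"
    by (simp add: sum_list_map_concat ev2_def split_def o_def)
  also have "\<dots> = sum_list (map (ev2 (\<lambda>u v. S u * v)) (pl (D (a * c))))"
    by (rule eval2[OF H_mod bi_Smul tqh_sym[OF D_mult]])
  also have "\<dots> = smH (eps (a * c)) 1" by (simp add: sum_pl anti1)
  finally show ?thesis by (simp add: eps_mult)
qed

lemma S_counit: "S y = (\<Sum>(c, d)\<leftarrow>D y. smH (eps c) (S d))"
proof -
  have "S y = S (\<Sum>(c, d)\<leftarrow>D y. smH (eps c) d)" using counit1[of y] by simp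
  also have "\<dots> = (\<Sum>(c, d)\<leftarrow>D y. smH (eps c) (S d))" by (simp add: S_sum split_def S_sm)
  finally show ?thesis .
qed

end

lemma sum_swap_pairs:
  "(\<Sum>(a1, a2)\<leftarrow>A. \<Sum>(c, d)\<leftarrow>B. G a1 a2 c d) = ((\<Sum>(c, d)\<leftarrow>B. \<Sum>(a1, a2)\<leftarrow>A. G a1 a2 c d) :: 'a::comm_monoid_add)"
  unfolding split_def by (rule sum_list_swap)

context PP
begin

lemma S_mult: "S (x * y) = S y * S x"
proof -
  define Fx where "Fx = (\<lambda>a1 a2 b. \<Sum>(c, d)\<leftarrow>D y. \<Sum>(c1, c2)\<leftarrow>D c. S (a1 * c1) * a2 * c2 * S d * S b)"
  have triFx: "tri smH Fx"
    unfolding tri_def Fx_def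
    by (simp add: split_def distrib_left distrib_right S_add S_sm H_smultL H_smultR sum_list_add_distr smH_sum)
  define T where "T = (\<Sum>(a, b)\<leftarrow>D x. \<Sum>(a1, a2)\<leftarrow>D a. Fx a1 a2 b)"
  have w1: "T = S y * S x"
  proof -
    have "T = (\<Sum>(a, b)\<leftarrow>D x. \<Sum>(c, d)\<leftarrow>D y. \<Sum>(a1, a2)\<leftarrow>D a. \<Sum>(c1, c2)\<leftarrow>D c. S (a1 * c1) * a2 * c2 * S d * S b)"
      unfolding T_def Fx_def by (rule arg_cong[where f = sum_list], rule map_cong[OF refl], clarify, rule sum_swap_pairs)
    also have "\<dots> = (\<Sum>(a, b)\<leftarrow>D x. \<Sum>(c, d)\<leftarrow>D y. smH (eps a * eps c) 1 * (S d * S b))"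
    proof -
      have "(\<Sum>(a1, a2)\<leftarrow>D a. \<Sum>(c1, c2)\<leftarrow>D c. S (a1 * c1) * a2 * c2 * S d * S b)
          = (\<Sum>(a1, a2)\<leftarrow>D a. \<Sum>(c1, c2)\<leftarrow>D c. S (a1 * c1) * (a2 * c2)) * (S d * S b)" for a b c d
        by (simp add: sum_list_mult_const[symmetric] mult.assoc split_def)
      then show ?thesis by (simp add: anti_prod)
    qed
    also have "\<dots> = (\<Sum>(a, b)\<leftarrow>D x. \<Sum>(c, d)\<leftarrow>D y. smH (eps c) (S d) * smH (eps a) (S b))"
      by (simp add: H_smultL H_smultR mult.commute)
    also have "\<dots> = (\<Sum>(c, d)\<leftarrow>D y. smH (eps c) (S d)) * (\<Sum>(a, b)\<leftarrow>D x. smH (eps a) (S b))"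
      by (simp add: sum_list_mult_const sum_list_const_mult split_def)
    also have "\<dots> = S y * S x" by (simp add: S_counit[symmetric])
    finally show ?thesis .
  qed
  have inner: "Fx a b1 b2 = S (a * y) * b1 * S b2" for a b1 b2
  proof -
    define G where "G = (\<lambda>c1 c2 d. S (a * c1) * b1 * c2 * S d * S b2)"
    have triG: "tri smH G"
      unfolding tri_def G_def
      by (simp add: split_def distrib_left distrib_right S_add S_sm H_smultL H_smultR)
    have "Fx a b1 b2 = sum_list (map (ev3 G) (D3R y))"
      unfolding Fx_def G_def by (simp add: sum_D3R)
    also have "\<dots> = sum_list (map (ev3 G) (D3L y))"
      by (rule eval3[OF H_mod triG tqh_sym[OF coassoc']])
    also have "\<dots> = (\<Sum>(c, d)\<leftarrow>D y. \<Sum>(d1, d2)\<leftarrow>D d. S (a * c) * b1 * d1 * S d2 * S b2)"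
      unfolding G_def by (simp add: sum_D3L)
    also have "\<dots> = (\<Sum>(c, d)\<leftarrow>D y. smH (eps d) (S (a * c) * b1 * S b2))"
    proof -
      have "(\<Sum>(d1, d2)\<leftarrow>D d. S (a * c) * b1 * d1 * S d2 * S b2)
          = (S (a * c) * b1) * (\<Sum>(d1, d2)\<leftarrow>D d. d1 * S d2) * S b2" for c d
        by (simp add: sum_list_mult_const[symmetric] sum_list_const_mult[symmetric] mult.assoc split_def)
      then show ?thesis by (simp add: anti2 H_smultL H_smultR)
    qed
    also have "\<dots> = S (a * (\<Sum>(c, d)\<leftarrow>D y. smH (eps d) c)) * b1 * S b2"
      by (simp add: sum_list_const_mult[symmetric] sum_list_mult_const[symmetric] S_sum split_def S_sm H_smultL H_smultR)
    also have "\<dots> = S (a * y) * b1 * S b2" by (simp add: counit2)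
    finally show ?thesis .
  qed
  have w2: "T = S (x * y)"
  proof -
    have "T = sum_list (map (ev3 Fx) (D3R x))" unfolding T_def by (simp add: sum_D3R)
    also have "\<dots> = sum_list (map (ev3 Fx) (D3L x))"
      by (rule eval3[OF H_mod triFx tqh_sym[OF coassoc']])
    also have "\<dots> = (\<Sum>(a, b)\<leftarrow>D x. \<Sum>(b1, b2)\<leftarrow>D b. S (a * y) * b1 * S b2)"
      by (simp add: sum_D3L inner)
    also have "\<dots> = (\<Sum>(a, b)\<leftarrow>D x. S (a * y) * smH (eps b) 1)"
    proof -
      have "(\<Sum>(b1, b2)\<leftarrow>D b. S (a * y) * b1 * S b2) = S (a * y) * (\<Sum>(b1, b2)\<leftarrow>D b. b1 * S b2)" for a b
        by (simp add: sum_list_const_mult[symmetric] mult.assoc split_def)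
      then show ?thesis by (simp add: anti2)
    qed
    also have "\<dots> = S ((\<Sum>(a, b)\<leftarrow>D x. smH (eps b) a) * y)"
      by (simp add: sum_list_mult_const[symmetric] S_sum split_def S_sm H_smultL H_smultR)
    also have "\<dots> = S (x * y)" by (simp add: counit2)
    finally show ?thesis .
  qed
  show ?thesis using w1 w2 by simp
qed

end

context PP
begin

definition mcompat :: "('v \<Rightarrow> 'v \<Rightarrow> 'v) \<Rightarrow> bool" where
  "mcompat m \<longleftrightarrow> (\<forall>a a' b. m (a + a') b = m a b + m a' b) \<and> (\<forall>a b b'. m a (b + b') = m a b + m a b')
    \<and> (\<forall>c a b. m (smV c a) b = smV c (m a b)) \<and> (\<forall>c a b. m a (smV c b) = smV c (m a b))
    \<and> (\<forall>h u d. act h (m u d) = (\<Sum>(x, y)\<leftarrow>D h. m (act x u) (act y d)))"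

lemma mcompat_mul: "mcompat mul"
  unfolding mcompat_def using mul_add1 mul_add2 mul_sm1 mul_sm2 act_mul by blast

lemma mcompat_flip: "mcompat (\<lambda>u d. mul d u)"
proof -
  have "act h (mul d u) = (\<Sum>(x, y)\<leftarrow>D h. mul (act y d) (act x u))" for h u d
  proof -
    have B: "bi smV (\<lambda>x y. mul (act x d) (act y u))"
      unfolding bi_def by (simp add: act_add1 act_sm1 mul_add1 mul_add2 mul_sm1 mul_sm2)
    have "act h (mul d u) = sum_list (map (ev2 (\<lambda>x y. mul (act x d) (act y u))) (pl (D h)))"
      by (simp add: act_mul sum_pl)
    also have "\<dots> = sum_list (map (ev2 (\<lambda>x y. mul (act x d) (act y u))) (pl (map (\<lambda>(a, b). (b, a)) (D h))))"
      by (rule eval2[OF V_mod B cocomm])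
    also have "\<dots> = (\<Sum>(x, y)\<leftarrow>D h. mul (act y d) (act x u))" by (simp add: sum_pl split_def o_def)
    finally show ?thesis .
  qed
  then show ?thesis unfolding mcompat_def using mul_add1 mul_add2 mul_sm1 mul_sm2 by simp
qed

lemma mc_add1: "mcompat m \<Longrightarrow> m (a + a') b = m a b + m a' b" unfolding mcompat_def by blast
lemma mc_add2: "mcompat m \<Longrightarrow> m a (b + b') = m a b + m a b'" unfolding mcompat_def by blast
lemma mc_sm1: "mcompat m \<Longrightarrow> m (smV c a) b = smV c (m a b)" unfolding mcompat_def by blast
lemma mc_sm2: "mcompat m \<Longrightarrow> m a (smV c b) = smV c (m a b)" unfolding mcompat_def by blast
lemma mc_act: "mcompat m \<Longrightarrow> act h (m u d) = (\<Sum>(x, y)\<leftarrow>D h. m (act x u) (act y d))" unfolding mcompat_def by blast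
lemma mc_zero1: "mcompat m \<Longrightarrow> m 0 b = 0" using mc_add1[of m 0 0 b] by simp
lemma mc_sum1: "mcompat m \<Longrightarrow> m (\<Sum>x\<leftarrow>L. f x) b = (\<Sum>x\<leftarrow>L. m (f x) b)"
  by (induction L) (simp_all add: mc_add1 mc_zero1)

lemma V_identity:
  assumes mc: "mcompat m"
  shows "m Z (act h e) = (\<Sum>(h1, h2)\<leftarrow>D h. act h1 (m (act (S h2) Z) e))"
proof -
  define F where "F = (\<lambda>u v w. m (act (u * S w) Z) (act v e))"
  have triF: "tri smV F"
    unfolding tri_def F_def
    by (simp add: distrib_left distrib_right S_add S_sm H_smultL H_smultR act_add1 act_sm1 mc_add1[OF mc] mc_add2[OF mc] mc_sm1[OF mc] mc_sm2[OF mc])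
  have "(\<Sum>(h1, h2)\<leftarrow>D h. act h1 (m (act (S h2) Z) e)) = (\<Sum>(h1, h2)\<leftarrow>D h. \<Sum>(u, v)\<leftarrow>D h1. F u v h2)"
    unfolding F_def by (simp add: mc_act[OF mc] act_mult split_def)
  also have "\<dots> = (\<Sum>(h1, h2)\<leftarrow>D h. \<Sum>(u, v)\<leftarrow>D h1. F u h2 v)"
    by (rule swap_eval[OF V_mod triF])
  also have "\<dots> = (\<Sum>(h1, h2)\<leftarrow>D h. m (act (\<Sum>(u, v)\<leftarrow>D h1. u * S v) Z) (act h2 e))"
    unfolding F_def by (simp add: act_sum1 mc_sum1[OF mc] split_def)
  also have "\<dots> = (\<Sum>(h1, h2)\<leftarrow>D h. smV (eps h1) (m Z (act h2 e)))"
    by (simp add: anti2 act_sm1 act_one mc_sm1[OF mc])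
  also have "\<dots> = m Z (act h e)"
  proof -
    have "m Z (act h e) = m Z (act (\<Sum>(h1, h2)\<leftarrow>D h. smH (eps h1) h2) e)" by (simp add: counit1)
    also have "\<dots> = (\<Sum>(h1, h2)\<leftarrow>D h. smV (eps h1) (m Z (act h2 e)))"
    proof -
      have "m Z (\<Sum>x\<leftarrow>L. f x) = (\<Sum>x\<leftarrow>L. m Z (f x))" for L and f :: "'h \<times> 'h \<Rightarrow> 'v"
        by (induction L) (simp_all add: mc_add2[OF mc] mc_sm2[OF mc, of Z 0 0, simplified])
      then show ?thesis by (simp add: act_sum1 split_def act_sm1 mc_sm2[OF mc])
    qed
    finally show ?thesis by simp
  qed
  finally show ?thesis by simp
qed

end

lemma mset_concat': "mset (concat L) = (\<Sum>l\<leftarrow>L. mset l)"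
  by (induction L) auto

lemma mset_concat_swap:
  "mset (concat (map (\<lambda>i. concat (map (f i) B)) A)) = mset (concat (map (\<lambda>j. concat (map (\<lambda>i. f i j) A)) B))"
  by (simp add: mset_concat' o_def sum_list_swap[of "\<lambda>i j. mset (f i j)"])

lemma mset_interleave: "mset (concat (map (\<lambda>p. [A p, B p]) L)) = mset (map A L @ map B L)"
  by (induction L) auto

lemma coprod_iter_len: "hs \<in> set (coprod_iter D (Suc k) h) \<Longrightarrow> length hs = Suc k"
proof (induction k arbitrary: h hs)
  case 0 then show ?case by simp
next
  case (Suc k) then show ?case by auto
qed

lemma coprod_iter_2: "coprod_iter D 2 h = pl (D h)"
  by (simp add: numeral_2_eq_2 pl_def split_def o_def)

context PP
begin

lemma tq_swap_pairs:
  "concat (map (\<lambda>(a1, a2). concat (map (\<lambda>(c, d). G a1 a2 c d) B)) A)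
   \<approx> concat (map (\<lambda>(c, d). concat (map (\<lambda>(a1, a2). G a1 a2 c d) A)) B)"
  by (rule tq_mset) (unfold split_def, rule mset_concat_swap)

lemma tq_interleave:
  assumes "\<And>p. p \<in> set L \<Longrightarrow> [F p] \<approx> [A p, B p]"
  shows "map F L \<approx> map A L @ map B L"
proof -
  have "map F L = concat (map (\<lambda>p. [F p]) L)" by (induction L) auto
  also have "\<dots> \<approx> concat (map (\<lambda>p. [A p, B p]) L)" by (rule tq_concat) (rule assms)
  also have "\<dots> \<approx> map A L @ map B L" by (rule tq_mset) (rule mset_interleave)
  finally show ?thesis .
qed

lemma gH0: "[([a + b, f], e)] \<approx> [([a, f], e), ([b, f], e)]"
  using gen_Hadd[of "[]" a b "[f]" e] by simp
lemma gH1: "[([f, a + b], e)] \<approx> [([f, a], e), ([f, b], e)]"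
  using gen_Hadd[of "[f]" a b "[]" e] by simp
lemma gS0: "[([smH c a, f], e)] \<approx> [([a, f], smV c e)]"
  using gen_Hsm[of "[]" c a "[f]" e] by (simp add: scT_def)
lemma gS1: "[([f, smH c a], e)] \<approx> [([f, a], smV c e)]"
  using gen_Hsm[of "[f]" c a "[]" e] by (simp add: scT_def)

lemma scT_concat: "scT smV c (concat (map f L)) = concat (map (\<lambda>x. scT smV c (f x)) L)"
  by (induction L) auto
lemma scT_map: "scT smV c (map (\<lambda>x. (g x, w x)) L) = map (\<lambda>x. (g x, smV c (w x))) L"
  by (simp add: scT_def)

definition FL :: "('v \<Rightarrow> 'v \<Rightarrow> 'v) \<Rightarrow> 'v \<Rightarrow> 'h \<Rightarrow> 'v \<Rightarrow> 'h \<Rightarrow> 'h \<Rightarrow> ('h list \<times> 'v) list" where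
  "FL m z F1 d x y = [([x, F1], m (act (S y) z) d)]"

lemma biV_FL: assumes mc: "mcompat m" shows "biV (FL m z F1 d)"
  unfolding biV_def FL_def
proof (intro conjI allI)
  fix x x' y show "[([x + x', F1], m (act (S y) z) d)] \<approx> [([x, F1], m (act (S y) z) d)] @ [([x', F1], m (act (S y) z) d)]"
    using gH0 by simp
next
  fix x y y' show "[([x, F1], m (act (S (y + y')) z) d)] \<approx> [([x, F1], m (act (S y) z) d)] @ [([x, F1], m (act (S y') z) d)]"
    using gen_Vadd by (simp add: S_add act_add1 mc_add1[OF mc])
next
  fix c x y show "[([smH c x, F1], m (act (S y) z) d)] \<approx> scT smV c [([x, F1], m (act (S y) z) d)]"
    using gS0 by (simp add: scT_def)
next
  fix c x y show "[([x, F1], m (act (S (smH c y)) z) d)] \<approx> scT smV c [([x, F1], m (act (S y) z) d)]"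
    by (simp add: scT_def S_sm act_sm1 mc_sm1[OF mc])
qed

lemma list_FL: "[([x, F1], m (act (S y) z) d). (x, y) \<leftarrow> L] = concat (map (ps2 (FL m z F1 d)) (pl L))"
  by (simp add: cc_pl FL_def split_def o_def)

lemma bal_inner:
  assumes mc: "mcompat m"
  shows "concat (map (\<lambda>(h1, h2). concat (map (\<lambda>(c, d). [([a * c, f1 * h2], m (act (S d) Z) e)]) (D h1))) (D h))
    \<approx> [([a, f1], m Z (act h e))]"
proof -
  define F where "F = (\<lambda>c d w. [([a * c, f1 * w], m (act (S d) Z) e)])"
  have triF: "triV F"
    unfolding triV_def F_def
  proof (intro conjI allI)
    fix x x' y z show "[([a * (x + x'), f1 * z], m (act (S y) Z) e)] \<approx> [([a * x, f1 * z], m (act (S y) Z) e)] @ [([a * x', f1 * z], m (act (S y) Z) e)]"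
      using gH0 by (simp add: distrib_left)
  next
    fix x y y' z show "[([a * x, f1 * z], m (act (S (y + y')) Z) e)] \<approx> [([a * x, f1 * z], m (act (S y) Z) e)] @ [([a * x, f1 * z], m (act (S y') Z) e)]"
      using gen_Vadd by (simp add: S_add act_add1 mc_add1[OF mc])
  next
    fix x y z z' show "[([a * x, f1 * (z + z')], m (act (S y) Z) e)] \<approx> [([a * x, f1 * z], m (act (S y) Z) e)] @ [([a * x, f1 * z'], m (act (S y) Z) e)]"
      using gH1 by (simp add: distrib_left)
  next
    fix c x y z show "[([a * smH c x, f1 * z], m (act (S y) Z) e)] \<approx> scT smV c [([a * x, f1 * z], m (act (S y) Z) e)]"
      using gS0 by (simp add: scT_def H_smultR)
  next
    fix c x y z show "[([a * x, f1 * z], m (act (S (smH c y)) Z) e)] \<approx> scT smV c [([a * x, f1 * z], m (act (S y) Z) e)]"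
      by (simp add: scT_def S_sm act_sm1 mc_sm1[OF mc])
  next
    fix c x y z show "[([a * x, f1 * smH c z], m (act (S y) Z) e)] \<approx> scT smV c [([a * x, f1 * z], m (act (S y) Z) e)]"
      using gS1 by (simp add: scT_def H_smultR)
  qed
  have "concat (map (\<lambda>(h1, h2). concat (map (\<lambda>(c, d). [([a * c, f1 * h2], m (act (S d) Z) e)]) (D h1))) (D h))
      = concat (map (\<lambda>(h1, h2). concat (map (\<lambda>(c, d). F c d h2) (D h1))) (D h))"
    by (simp add: F_def)
  also have "\<dots> \<approx> concat (map (\<lambda>(h1, h2). concat (map (\<lambda>(c, d). F c h2 d) (D h1))) (D h))"
    by (rule swap_V[OF triF])
  also have "\<dots> \<approx> concat (map (\<lambda>(h1, h2). [([a, f1], act h1 (m (act (S h2) Z) e))]) (D h))"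
  proof (rule tq_concat, clarify)
    fix h1 h2
    have "concat (map (\<lambda>(c, d). F c h2 d) (D h1)) = map (\<lambda>hs. (map2 (*) [a, f1] hs, m (act (S h2) Z) e)) (coprod_iter D (length [a, f1]) h1)"
      by (simp add: F_def coprod_iter_2[simplified numeral_2_eq_2] pl_def split_def o_def)
    also have "\<dots> \<approx> [([a, f1], act h1 (m (act (S h2) Z) e))]"
      by (rule gen_bal) simp
    finally show "concat (map (\<lambda>(c, d). F c h2 d) (D h1)) \<approx> [([a, f1], act h1 (m (act (S h2) Z) e))]" .
  qed
  also have "\<dots> = map (\<lambda>p. ([a, f1], act (fst p) (m (act (S (snd p)) Z) e))) (D h)"
    by (induction "D h") (auto simp: split_def)
  also have "\<dots> \<approx> [([a, f1], \<Sum>p\<leftarrow>D h. act (fst p) (m (act (S (snd p)) Z) e))]"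
    by (rule gen_sum)
  also have "\<dots> = [([a, f1], m Z (act h e))]"
    by (simp add: V_identity[OF mc] split_def)
  finally show ?thesis .
qed

end

context PP
begin

lemma concat_map_Nil: "(\<And>x. x \<in> set L \<Longrightarrow> f x = []) \<Longrightarrow> concat (map f L) = []"
  by (induction L) auto

definition phiL :: "('v \<Rightarrow> 'v \<Rightarrow> 'v) \<Rightarrow> 'v \<Rightarrow> 'h list \<times> 'v \<Rightarrow> ('h list \<times> 'v) list" where
  "phiL m z t = (if length (fst t) = 2 then [([x, fst t ! 1], m (act (S y) z) (snd t)). (x, y) \<leftarrow> D (fst t ! 0)] else [])"

definition lmG :: "('v \<Rightarrow> 'v \<Rightarrow> 'v) \<Rightarrow> 'v \<Rightarrow> ('h list \<times> 'v) list \<Rightarrow> ('h list \<times> 'v) list" where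
  "lmG m z X = [([x, fs ! 1], m (act (S y) z) d). (fs, d) \<leftarrow> X, (x, y) \<leftarrow> D (fs ! 0)]"

lemma lmG_eq: "(\<And>t. t \<in> set X \<Longrightarrow> length (fst t) = 2) \<Longrightarrow> concat (map (phiL m z) X) = lmG m z X"
  unfolding lmG_def by (induction X) (auto simp: phiL_def split_def)

lemma lmG_bal:
  assumes mc: "mcompat m"
  shows "concat (map (\<lambda>(h1, h2). [([x, f1 * h2], m (act (S y) z) e). (x, y) \<leftarrow> D (f0 * h1)]) (D h))
    \<approx> [([x, f1], m (act (S y) z) (act h e)). (x, y) \<leftarrow> D f0]"
proof -
  have "concat (map (\<lambda>(h1, h2). [([x, f1 * h2], m (act (S y) z) e). (x, y) \<leftarrow> D (f0 * h1)]) (D h))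
      = concat (map (\<lambda>(h1, h2). concat (map (ps2 (FL m z (f1 * h2) e)) (pl (D (f0 * h1))))) (D h))"
    by (simp only: list_FL)
  also have "\<dots> \<approx> concat (map (\<lambda>(h1, h2). concat (map (ps2 (FL m z (f1 * h2) e)) [[a * c, b * d]. (a, b) \<leftarrow> D f0, (c, d) \<leftarrow> D h1])) (D h))"
    by (rule tq_concat, clarify, rule lift2[OF biV_FL[OF mc] D_mult])
  also have "\<dots> = concat (map (\<lambda>(h1, h2). concat (map (\<lambda>(a, b'). concat (map (\<lambda>(c, d). [([a * c, f1 * h2], m (act (S d) (act (S b') z)) e)]) (D h1))) (D f0))) (D h))"
    by (simp add: concat_map_concat ps2_def FL_def split_def o_def S_mult act_mult)
  also have "\<dots> \<approx> concat (map (\<lambda>(a, b'). concat (map (\<lambda>(h1, h2). concat (map (\<lambda>(c, d). [([a * c, f1 * h2], m (act (S d) (act (S b') z)) e)]) (D h1))) (D h))) (D f0))"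
    by (rule tq_swap_pairs)
  also have "\<dots> \<approx> concat (map (\<lambda>(a, b'). [([a, f1], m (act (S b') z) (act h e))]) (D f0))"
    by (rule tq_concat, clarify, rule bal_inner[OF mc])
  also have "\<dots> = [([x, f1], m (act (S y) z) (act h e)). (x, y) \<leftarrow> D f0]"
    by (simp add: split_def)
  finally show ?thesis .
qed

lemma lmG_lift:
  assumes mc: "mcompat m" and XY: "X \<approx> Y"
  shows "concat (map (phiL m z) X) \<approx> concat (map (phiL m z) Y)"
proof (rule tq_lift[OF _ _ _ _ _ XY])
  fix xs a b ys e
  show "phiL m z (xs @ [a + b] @ ys, e) \<approx> phiL m z (xs @ [a] @ ys, e) @ phiL m z (xs @ [b] @ ys, e)"
  proof (cases "length (xs @ [a] @ ys) = 2")
    case True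
    then show ?thesis
    proof (cases rule: len2_cases)
      case (1 f1)
      have "phiL m z (xs @ [a + b] @ ys, e) = concat (map (ps2 (FL m z f1 e)) (pl (D (a + b))))"
        by (simp add: 1 phiL_def list_FL)
      also have "\<dots> \<approx> concat (map (ps2 (FL m z f1 e)) (pl (D a @ D b)))"
        by (rule lift2[OF biV_FL[OF mc] D_add])
      also have "\<dots> = phiL m z (xs @ [a] @ ys, e) @ phiL m z (xs @ [b] @ ys, e)"
        by (simp add: 1 phiL_def list_FL pl_def)
      finally show ?thesis .
    next
      case (2 f0)
      have "phiL m z (xs @ [a + b] @ ys, e) = map (\<lambda>p. ([fst p, a + b], m (act (S (snd p)) z) e)) (D f0)"
        by (simp add: 2 phiL_def split_def)
      also have "\<dots> \<approx> map (\<lambda>p. ([fst p, a], m (act (S (snd p)) z) e)) (D f0) @ map (\<lambda>p. ([fst p, b], m (act (S (snd p)) z) e)) (D f0)"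
        by (rule tq_interleave) (rule gH1)
      also have "\<dots> = phiL m z (xs @ [a] @ ys, e) @ phiL m z (xs @ [b] @ ys, e)"
        by (simp add: 2 phiL_def split_def)
      finally show ?thesis .
    qed
  qed (simp add: phiL_def)
next
  fix xs c a ys e
  show "phiL m z (xs @ [smH c a] @ ys, e) \<approx> scT smV c (phiL m z (xs @ [a] @ ys, e))"
  proof (cases "length (xs @ [a] @ ys) = 2")
    case True
    then show ?thesis
    proof (cases rule: len2_cases)
      case (1 f1)
      have "phiL m z (xs @ [smH c a] @ ys, e) = concat (map (ps2 (FL m z f1 e)) (pl (D (smH c a))))"
        by (simp add: 1 phiL_def list_FL)
      also have "\<dots> \<approx> concat (map (ps2 (FL m z f1 e)) (pl (map (\<lambda>(a, b). (smH c a, b)) (D a))))"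
        by (rule lift2[OF biV_FL[OF mc] D_sm])
      also have "\<dots> = map (\<lambda>p. ([smH c (fst p), f1], m (act (S (snd p)) z) e)) (D a)"
        by (simp add: cc_pl FL_def split_def o_def)
      also have "\<dots> = concat (map (\<lambda>p. [([smH c (fst p), f1], m (act (S (snd p)) z) e)]) (D a))"
        by (induction "D a") auto
      also have "\<dots> \<approx> concat (map (\<lambda>p. [([fst p, f1], smV c (m (act (S (snd p)) z) e))]) (D a))"
        by (rule tq_concat) (rule gS0)
      also have "\<dots> = scT smV c (phiL m z (xs @ [a] @ ys, e))"
        by (simp add: 1 phiL_def scT_def split_def o_def)
      finally show ?thesis .
    next
      case (2 f0)
      have "phiL m z (xs @ [smH c a] @ ys, e) = concat (map (\<lambda>p. [([fst p, smH c a], m (act (S (snd p)) z) e)]) (D f0))"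
        by (simp add: 2 phiL_def split_def)
      also have "\<dots> \<approx> concat (map (\<lambda>p. [([fst p, a], smV c (m (act (S (snd p)) z) e))]) (D f0))"
        by (rule tq_concat) (rule gS1)
      also have "\<dots> = scT smV c (phiL m z (xs @ [a] @ ys, e))"
        by (simp add: 2 phiL_def scT_def split_def o_def)
      finally show ?thesis .
    qed
  qed (simp add: phiL_def)
next
  fix fs e e'
  show "phiL m z (fs, e + e') \<approx> phiL m z (fs, e) @ phiL m z (fs, e')"
  proof (cases "length fs = 2")
    case True
    have "phiL m z (fs, e + e') = map (\<lambda>p. ([fst p, fs ! 1], m (act (S (snd p)) z) (e + e'))) (D (fs ! 0))"
      by (simp add: True phiL_def split_def)
    also have "\<dots> \<approx> map (\<lambda>p. ([fst p, fs ! 1], m (act (S (snd p)) z) e)) (D (fs ! 0)) @ map (\<lambda>p. ([fst p, fs ! 1], m (act (S (snd p)) z) e')) (D (fs ! 0))"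
      by (rule tq_interleave) (simp add: mc_add2[OF mc] gen_Vadd)
    also have "\<dots> = phiL m z (fs, e) @ phiL m z (fs, e')"
      by (simp add: True phiL_def split_def)
    finally show ?thesis .
  qed (simp add: phiL_def)
next
  fix fs c e
  show "phiL m z (fs, smV c e) \<approx> scT smV c (phiL m z (fs, e))"
    by (rule tq_eq) (simp add: phiL_def scT_def mc_sm2[OF mc] split_def o_def)
next
  fix fs :: "'h list" and h :: 'h and e :: 'v
  assume ne: "fs \<noteq> []"
  show "concat (map (\<lambda>hs. phiL m z (map2 (*) fs hs, e)) (coprod_iter D (length fs) h)) \<approx> phiL m z (fs, act h e)"
  proof (cases "length fs = 2")
    case True
    then obtain f0 f1 where fs: "fs = [f0, f1]"
      by (cases fs; cases "tl fs"; auto simp: length_Suc_conv)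
    have "concat (map (\<lambda>hs. phiL m z (map2 (*) fs hs, e)) (coprod_iter D (length fs) h))
        = concat (map (\<lambda>(h1, h2). [([x, f1 * h2], m (act (S y) z) e). (x, y) \<leftarrow> D (f0 * h1)]) (D h))"
      by (simp add: fs coprod_iter_2[simplified numeral_2_eq_2] pl_def phiL_def split_def o_def)
    also have "\<dots> \<approx> [([x, f1], m (act (S y) z) (act h e)). (x, y) \<leftarrow> D f0]"
      by (rule lmG_bal[OF mc])
    also have "\<dots> = phiL m z (fs, act h e)"
      by (simp add: fs phiL_def)
    finally show ?thesis .
  next
    case False
    obtain k where k: "length fs = Suc k" using ne by (cases fs) auto
    have "phiL m z (map2 (*) fs hs, e) = []" if "hs \<in> set (coprod_iter D (length fs) h)" for hs
      using coprod_iter_len[where hs = hs and k = k and h = h and D = D] that False k by (simp add: phiL_def)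
    then have c1: "concat (map (\<lambda>hs. phiL m z (map2 (*) fs hs, e)) (coprod_iter D (length fs) h)) = []"
      by (intro concat_map_Nil) blast
    have c2: "phiL m z (fs, act h e) = []" using False by (simp add: phiL_def)
    show ?thesis unfolding c1 c2 by (rule tq_refl)
  qed
qed

end

context PP
begin

definition phiR :: "'h list \<times> 'v \<Rightarrow> ('h list \<times> 'v) list" where
  "phiR t = (if length (fst t) = 2 then [(rev (fst t), snd t)] else [])"
definition phiS :: "'f \<Rightarrow> 'h list \<times> 'v \<Rightarrow> ('h list \<times> 'v) list" where
  "phiS k t = [(fst t, smV k (snd t))]"

abbreviation revT :: "('h list \<times> 'v) list \<Rightarrow> ('h list \<times> 'v) list" where
  "revT X \<equiv> map (\<lambda>(fs, e). (rev fs, e)) X"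

lemma phiR_eq: "(\<And>t. t \<in> set X \<Longrightarrow> length (fst t) = 2) \<Longrightarrow> concat (map phiR X) = revT X"
  by (induction X) (auto simp: phiR_def split_def)
lemma phiS_eq: "concat (map (phiS k) X) = scT smV k X"
  by (induction X) (auto simp: phiS_def scT_def split_def)

lemma len2_eq: "length fs = 2 \<Longrightarrow> \<exists>f0 f1. fs = [f0, f1]"
  by (cases fs; cases "tl fs"; auto simp: length_Suc_conv)

lemma rev_lift: assumes XY: "X \<approx> Y" shows "concat (map phiR X) \<approx> concat (map phiR Y)"
proof (rule tq_lift[OF _ _ _ _ _ XY])
  fix xs a b ys e
  show "phiR (xs @ [a + b] @ ys, e) \<approx> phiR (xs @ [a] @ ys, e) @ phiR (xs @ [b] @ ys, e)"
  proof (cases "length (xs @ [a] @ ys) = 2")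
    case True then show ?thesis
      by (cases rule: len2_cases) (simp_all add: phiR_def gH0 gH1)
  qed (simp add: phiR_def)
next
  fix xs c a ys e
  show "phiR (xs @ [smH c a] @ ys, e) \<approx> scT smV c (phiR (xs @ [a] @ ys, e))"
  proof (cases "length (xs @ [a] @ ys) = 2")
    case True then show ?thesis
      by (cases rule: len2_cases) (simp_all add: phiR_def gS0 gS1)
  qed (simp add: phiR_def)
next
  fix fs e e'
  show "phiR (fs, e + e') \<approx> phiR (fs, e) @ phiR (fs, e')"
    by (simp add: phiR_def gen_Vadd)
next
  fix fs c e
  show "phiR (fs, smV c e) \<approx> scT smV c (phiR (fs, e))"
    by (simp add: phiR_def)
next
  fix fs :: "'h list" and h :: 'h and e :: 'v
  assume ne: "fs \<noteq> []"
  show "concat (map (\<lambda>hs. phiR (map2 (*) fs hs, e)) (coprod_iter D (length fs) h)) \<approx> phiR (fs, act h e)"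
  proof (cases "length fs = 2")
    case True
    then obtain f0 f1 where fs: "fs = [f0, f1]" using len2_eq by blast
    define G where "G = (\<lambda>x y. [([f1 * y, f0 * x], e)])"
    have BG: "biV G" unfolding biV_def G_def
      by (simp add: distrib_left gH0 gH1 H_smultR gS0 gS1 scT_def)
    have "concat (map (\<lambda>hs. phiR (map2 (*) fs hs, e)) (coprod_iter D (length fs) h))
        = concat (map (ps2 G) (pl (D h)))"
      by (simp add: fs coprod_iter_2[simplified numeral_2_eq_2] phiR_def G_def cc_pl split_def o_def)
    also have "\<dots> \<approx> concat (map (ps2 G) (pl (map (\<lambda>(a, b). (b, a)) (D h))))"
      by (rule lift2[OF BG cocomm])
    also have "\<dots> = map (\<lambda>hs. (map2 (*) [f1, f0] hs, e)) (coprod_iter D (length [f1, f0]) h)"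
      by (simp add: coprod_iter_2[simplified numeral_2_eq_2] G_def cc_pl pl_def ps2_def split_def o_def)
    also have "\<dots> \<approx> [([f1, f0], act h e)]" by (rule gen_bal) simp
    also have "\<dots> = phiR (fs, act h e)" by (simp add: fs phiR_def)
    finally show ?thesis .
  next
    case False
    obtain k where k: "length fs = Suc k" using ne by (cases fs) auto
    have "phiR (map2 (*) fs hs, e) = []" if "hs \<in> set (coprod_iter D (length fs) h)" for hs
      using coprod_iter_len[where hs = hs and k = k and h = h and D = D] that False k by (simp add: phiR_def)
    then have c1: "concat (map (\<lambda>hs. phiR (map2 (*) fs hs, e)) (coprod_iter D (length fs) h)) = []"
      by (intro concat_map_Nil) blast
    have c2: "phiR (fs, act h e) = []" using False by (simp add: phiR_def)
    show ?thesis unfolding c1 c2 by (rule tq_refl)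
  qed
qed

lemma sc_lift: assumes XY: "X \<approx> Y" shows "concat (map (phiS k) X) \<approx> concat (map (phiS k) Y)"
proof (rule tq_lift[OF _ _ _ _ _ XY])
  fix xs a b ys e
  show "phiS k (xs @ [a + b] @ ys, e) \<approx> phiS k (xs @ [a] @ ys, e) @ phiS k (xs @ [b] @ ys, e)"
    by (simp add: phiS_def gen_Hadd[simplified])
next
  fix xs c a ys e
  show "phiS k (xs @ [smH c a] @ ys, e) \<approx> scT smV c (phiS k (xs @ [a] @ ys, e))"
    using gen_Hsm[of xs c a ys "smV k e"] by (simp add: phiS_def)
next
  fix fs e e'
  show "phiS k (fs, e + e') \<approx> phiS k (fs, e) @ phiS k (fs, e')"
    by (simp add: phiS_def smV_add gen_Vadd)
next
  fix fs c e
  show "phiS k (fs, smV c e) \<approx> scT smV c (phiS k (fs, e))"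
    by (simp add: phiS_def mult.commute)
next
  fix fs :: "'h list" and h :: 'h and e :: 'v
  assume ne: "fs \<noteq> []"
  have "concat (map (\<lambda>hs. phiS k (map2 (*) fs hs, e)) (coprod_iter D (length fs) h))
      = map (\<lambda>hs. (map2 (*) fs hs, smV k e)) (coprod_iter D (length fs) h)"
    by (simp add: phiS_def)
  also have "\<dots> \<approx> [(fs, act h (smV k e))]" by (rule gen_bal[OF ne])
  also have "\<dots> = phiS k (fs, act h e)" by (simp add: phiS_def act_sm2)
  finally show "concat (map (\<lambda>hs. phiS k (map2 (*) fs hs, e)) (coprod_iter D (length fs) h)) \<approx> phiS k (fs, act h e)" .
qed

end

context PP
begin

definition all2 :: "('h list \<times> 'v) list \<Rightarrow> bool" where
  "all2 X \<longleftrightarrow> (\<forall>t\<in>set X. length (fst t) = 2)"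

lemma all2_app[simp]: "all2 (X @ Y) \<longleftrightarrow> all2 X \<and> all2 Y" by (auto simp: all2_def)
lemma all2_rev[simp]: "all2 (revT X) \<longleftrightarrow> all2 X" by (auto simp: all2_def split_def)
lemma all2_scT[simp]: "all2 (scT smV k X) \<longleftrightarrow> all2 X" by (auto simp: all2_def scT_def split_def)
lemma all2_br: "all2 (br a b)" unfolding all2_def using br_len by fastforce
lemma all2_rmul: "all2 (rmul D S act mul X c)" by (auto simp: all2_def rmul_def)
lemma all2_lmG: "all2 (lmG m z X)" by (auto simp: all2_def lmG_def)

lemma L_rev: "X \<approx> Y \<Longrightarrow> all2 X \<Longrightarrow> all2 Y \<Longrightarrow> revT X \<approx> revT Y"
  using rev_lift[of X Y] phiR_eq[of X] phiR_eq[of Y] unfolding all2_def by simp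
lemma L_sc: "X \<approx> Y \<Longrightarrow> scT smV k X \<approx> scT smV k Y"
  using sc_lift[of X Y k] by (simp add: phiS_eq)
lemma L_lm: "mcompat m \<Longrightarrow> X \<approx> Y \<Longrightarrow> all2 X \<Longrightarrow> all2 Y \<Longrightarrow> lmG m z X \<approx> lmG m z Y"
  using lmG_lift[of m X Y z] lmG_eq[of X m z] lmG_eq[of Y m z] unfolding all2_def by simp

lemma rmul_rev: "all2 X \<Longrightarrow> revT (rmul D S act mul X c) = lmG (\<lambda>u d. mul d u) c (revT X)"
proof (induction X)
  case Nil then show ?case by (simp add: rmul_def lmG_def)
next
  case (Cons t X)
  obtain fs e where t: "t = (fs, e)" by (cases t)
  have "length fs = 2" using Cons.prems t by (simp add: all2_def)
  then obtain f0 f1 where fs: "fs = [f0, f1]" using len2_eq by blast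
  have "all2 X" using Cons.prems by (simp add: all2_def)
  then show ?case using Cons.IH by (simp add: t fs rmul_def lmG_def split_def o_def)
qed

lemma lmul_eq: "lmul D S act mul a X = lmG mul a X"
  by (simp add: lmul_def lmG_def)

lemma lmG_scT: "mcompat m \<Longrightarrow> lmG m z (scT smV k X) = scT smV k (lmG m z X)"
  by (induction X) (auto simp: lmG_def scT_def split_def mc_sm2)

lemma revT_scT: "revT (scT smV k X) = scT smV k (revT X)"
  by (induction X) (auto simp: scT_def)
lemma scT_scT: "scT smV a (scT smV b X) = scT smV (a * b) X"
  by (induction X) (auto simp: scT_def)
lemma scT_one: "scT smV 1 X = X"
  by (induction X) (auto simp: scT_def)
lemma scT_cong: "a = b \<Longrightarrow> scT smV a X = scT smV b X" by simp

lemma homog_swap: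
  assumes Y: "\<And>fs e. (fs, e) \<in> set Y \<Longrightarrow> e \<in> Vp V0 V1 p" and b: "b \<in> Vp V0 V1 pb"
  shows "lmG (\<lambda>u d. mul d u) b Y = scT smV (sgn_pp p pb) (lmG mul b Y)"
  using Y
proof (induction Y)
  case Nil then show ?case by (simp add: lmG_def)
next
  case (Cons t Y)
  obtain fs e where t: "t = (fs, e)" by (cases t)
  have e: "e \<in> Vp V0 V1 p" using Cons.prems t by auto
  have w: "mul e (act (S y) b) = smV (sgn_pp p pb) (mul (act (S y) b) e)" for y
    by (rule mul_comm[OF e act_Vp[OF b]])
  have IH: "lmG (\<lambda>u d. mul d u) b Y = scT smV (sgn_pp p pb) (lmG mul b Y)"
    using Cons.IH Cons.prems by auto
  have "lmG (\<lambda>u d. mul d u) b (t # Y) = [([x, fs ! 1], mul e (act (S y) b)). (x, y) \<leftarrow> D (fs ! 0)] @ lmG (\<lambda>u d. mul d u) b Y"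
    by (simp add: lmG_def t)
  also have "\<dots> = scT smV (sgn_pp p pb) ([([x, fs ! 1], mul (act (S y) b) e). (x, y) \<leftarrow> D (fs ! 0)]) @ scT smV (sgn_pp p pb) (lmG mul b Y)"
    by (simp add: IH w scT_def split_def o_def)
  also have "\<dots> = scT smV (sgn_pp p pb) (lmG mul b (t # Y))"
    by (simp add: lmG_def t)
  finally show ?case .
qed

lemma sgn_sq: "sgn_pp p q * sgn_pp p q = (1 :: 'f)" by (simp add: sgn_pp_def)
lemma sgn_sym: "sgn_pp p q = (sgn_pp q p :: 'f)" by (auto simp: sgn_pp_def)

lemma keyK:
  assumes a: "a \<in> Vp V0 V1 pa" and b: "b \<in> Vp V0 V1 pb" and c: "c \<in> Vp V0 V1 pc"
  shows "revT (rmul D S act mul (br c a) b) \<approx> scT smV (sgn_pp (pc \<noteq> pa) pb * - sgn_pp pc pa) (lmul D S act mul b (br a c))"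
proof -
  obtain Y where Y1: "br c a \<approx> Y" and Y2: "\<forall>(fs, e)\<in>set Y. length fs = 2 \<and> e \<in> Vp V0 V1 (pc \<noteq> pa)"
    using br_even[OF c a] by blast
  have aY: "all2 Y" using Y2 by (auto simp: all2_def)
  have eY: "\<And>fs e. (fs, e) \<in> set (revT Y) \<Longrightarrow> e \<in> Vp V0 V1 (pc \<noteq> pa)" using Y2 by auto
  let ?s = "sgn_pp (pc \<noteq> pa) pb :: 'f" and ?k = "- sgn_pp pc pa :: 'f"
  have "revT (rmul D S act mul (br c a) b) = lmG (\<lambda>u d. mul d u) b (revT (br c a))"
    by (rule rmul_rev[OF all2_br])
  also have "\<dots> \<approx> lmG (\<lambda>u d. mul d u) b (revT Y)"
    by (rule L_lm[OF mcompat_flip L_rev[OF Y1 all2_br aY]]) (simp_all add: all2_br aY)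
  also have "\<dots> = scT smV ?s (lmG mul b (revT Y))"
    by (rule homog_swap[OF eY b])
  finally have A: "revT (rmul D S act mul (br c a) b) \<approx> scT smV ?s (lmG mul b (revT Y))" .
  have "lmG mul b (br a c) \<approx> lmG mul b (scT smV ?k (revT (br c a)))"
    by (rule L_lm[OF mcompat_mul br_skew[OF c a]]) (simp_all add: all2_br)
  also have "\<dots> \<approx> lmG mul b (scT smV ?k (revT Y))"
    by (rule L_lm[OF mcompat_mul L_sc[OF L_rev[OF Y1 all2_br aY]]]) (simp_all add: all2_br aY)
  also have "\<dots> = scT smV ?k (lmG mul b (revT Y))"
    by (rule lmG_scT[OF mcompat_mul])
  finally have B: "lmG mul b (br a c) \<approx> scT smV ?k (lmG mul b (revT Y))" .
  have "lmG mul b (revT Y) = scT smV ?k (scT smV ?k (lmG mul b (revT Y)))"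
    by (simp add: scT_scT sgn_sq scT_one)
  also have "\<dots> \<approx> scT smV ?k (lmG mul b (br a c))"
    by (rule L_sc[OF tq_sym[OF B]])
  finally have C: "lmG mul b (revT Y) \<approx> scT smV ?k (lmG mul b (br a c))" .
  have "revT (rmul D S act mul (br c a) b) \<approx> scT smV ?s (scT smV ?k (lmG mul b (br a c)))"
    by (rule tq_trans[OF A L_sc[OF C]])
  then show ?thesis by (simp add: scT_scT lmul_eq)
qed

theorem main:
  assumes a: "a \<in> Vp V0 V1 pa" and b: "b \<in> Vp V0 V1 pb" and c: "c \<in> Vp V0 V1 pc"
  shows "br (mul a b) c \<approx> lmul D S act mul a (br b c) @ scT smV (sgn_pp pa pb) (lmul D S act mul b (br a c))"
proof -
  have ab: "mul a b \<in> Vp V0 V1 (pa \<noteq> pb)" by (rule mul_Vp[OF a b])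
  let ?k = "- sgn_pp pc (pa \<noteq> pb) :: 'f"
  let ?A = "rmul D S act mul (br c a) b" and ?B = "rmul D S act mul (br c b) a"
  let ?s = "sgn_pp pa pb :: 'f"
  have "br (mul a b) c \<approx> scT smV ?k (revT (br c (mul a b)))"
    by (rule br_skew[OF c ab])
  also have "\<dots> \<approx> scT smV ?k (revT (?A @ scT smV ?s ?B))"
    by (rule L_sc, rule L_rev[OF leibniz[OF c a b]]) (simp_all add: all2_br all2_rmul)
  also have "\<dots> = scT smV ?k (revT ?A) @ scT smV (?k * ?s) (revT ?B)"
    by (simp add: revT_scT scT_scT)
  also have "\<dots> \<approx> scT smV ?k (scT smV (sgn_pp (pc \<noteq> pa) pb * - sgn_pp pc pa) (lmul D S act mul b (br a c)))
              @ scT smV (?k * ?s) (scT smV (sgn_pp (pc \<noteq> pb) pa * - sgn_pp pc pb) (lmul D S act mul a (br b c)))"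
    by (rule tq_app; rule L_sc; rule keyK) (simp_all add: a b c)
  also have "\<dots> = scT smV ?s (lmul D S act mul b (br a c)) @ lmul D S act mul a (br b c)"
  proof -
    have k1: "?k * (sgn_pp (pc \<noteq> pa) pb * - sgn_pp pc pa) = ?s"
      by (cases pa; cases pb; cases pc) (simp_all add: sgn_pp_def)
    have k2: "?k * ?s * (sgn_pp (pc \<noteq> pb) pa * - sgn_pp pc pb) = 1"
      by (cases pa; cases pb; cases pc) (simp_all add: sgn_pp_def)
    show ?thesis by (simp only: scT_scT k1 k2 scT_one)
  qed
  also have "\<dots> \<approx> lmul D S act mul a (br b c) @ scT smV ?s (lmul D S act mul b (br a c))"
    by (rule tq_mset) simp
  finally show ?thesis .
qed

end

theorem lemma4p7:
  fixes smH :: "'f::field_char_0 \<Rightarrow> 'h::ring_1 \<Rightarrow> 'h"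
    and D :: "'h \<Rightarrow> ('h \<times> 'h) list" and eps :: "'h \<Rightarrow> 'f" and S :: "'h \<Rightarrow> 'h"
    and smV :: "'f \<Rightarrow> 'v::ab_group_add \<Rightarrow> 'v" and V0 V1 :: "'v set"
    and act :: "'h \<Rightarrow> 'v \<Rightarrow> 'v" and br :: "'v \<Rightarrow> 'v \<Rightarrow> ('h list \<times> 'v) list"
    and mul :: "'v \<Rightarrow> 'v \<Rightarrow> 'v"
  assumes "poisson_pseudo smH D eps S smV V0 V1 act br mul"
    and "a \<in> Vp V0 V1 pa" and "b \<in> Vp V0 V1 pb" and "c \<in> Vp V0 V1 pc"
  shows "teqV smH smV D act (br (mul a b) c)
           (lmul D S act mul a (br b c) @ scT smV (sgn_pp pa pb) (lmul D S act mul b (br a c)))"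
  using PP.main[OF PP.intro[OF assms(1)] assms(2) assms(3) assms(4)] .

end
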